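(* Let $n\ge 2$, let $G$ be a subgroup of $B_n$, let $F_n\rtimes G$ denote the subgroup of $F_n\rtimes B_n$ generated by $F_n$ and $G$, and let $\rho\colon F_n\rtimes G\to\mathrm{GL}(V)$ be a representation on a finite-dimensional complex vector space $V$, extended linearly to $\mathbf{Z}[F_n\rtimes G]\to\mathrm{End}(V)$. For $\beta\in G$, every entry of $\phi(\beta)$ lies in $\mathbf{Z}[F_n\rtimes G]$, and the map $\rho^+\colon G\to\mathrm{GL}(V^{\oplus n})$ sending $\beta$ to the block matrix whose $(k,l)$ block is $\rho(\phi(\beta)_{kl})$ is a well-defined representation of $G$.
   Context: The braid group $B_n$ has generators $\sigma_1,\dots,\sigma_{n-1}$ with relations $\sigma_i\sigma_j=\sigma_j\sigma_i$ for $|i-j|>1$ and $\sigma_i\sigma_j\sigma_i=\sigma_j\sigma_i\sigma_j$ for $|i-j|=1$. Let $F_n$ be the free group on $g_1,\dots,g_n$. The semidirect product $F_n\rtimes B_n$ is the group generated by $F_n$ and $B_n$ subject to the additional relations $g_{i+1}\sigma_i=\sigma_i g_i$, $g_i\sigma_i=\sigma_i g_i g_{i+1}g_i^{-1}$, and $g_j\sigma_i=\sigma_i g_j$ for $j\notin\{i,i+1\}$. For $i=1,\dots,n-1$ let $R_i=\begin{bmatrix}0&g_i\\1&1-g_i\end{bmatrix}$ (entries in the group ring $\mathbf{Z}[F_n\rtimes B_n]$). Let $\phi$ be the homomorphism from $B_n$ to the group of invertible $n\times n$ matrices over $\mathbf{Z}[F_n\rtimes B_n]$ (usual matrix multiplication)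 given by $\phi(\sigma_i)=\sigma_i\cdot\mathrm{diag}(I_{i-1},R_i,I_{n-i-1})$, where the scalar $\sigma_i$ multiplies every entry on the left. *)

theory Defs
  imports "Jordan_Normal_Form.Matrix" "HOL-Algebra.Generated_Groups"
begin

text \<open>A letter (x, False) stands for the generator x, (x, True) for its inverse.\<close>
type_synonym 'a word = "('a \<times> bool) list"

inductive_set pres_rel :: "'a set \<Rightarrow> ('a word \<times> 'a word) set \<Rightarrow> ('a word \<times> 'a word) set"
  for A :: "'a set" and R :: "('a word \<times> 'a word) set" where
  refl: "w \<in> lists (A \<times> UNIV) \<Longrightarrow> (w, w) \<in> pres_rel A R"
| sym: "(u, v) \<in> pres_rel A R \<Longrightarrow> (v, u) \<in> pres_rel A R"
| trans: "(u, v) \<in> pres_rel A R \<Longrightarrow> (v, w) \<in> pres_rel A R \<Longrightarrow> (u, w) \<in> pres_rel A R"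
| cancel: "a \<in> A \<Longrightarrow> ([(a, b), (a, \<not> b)], []) \<in> pres_rel A R"
| rel: "(u, v) \<in> R \<Longrightarrow> u \<in> lists (A \<times> UNIV) \<Longrightarrow> v \<in> lists (A \<times> UNIV) \<Longrightarrow> (u, v) \<in> pres_rel A R"
| cong: "(u, v) \<in> pres_rel A R \<Longrightarrow> (u', v') \<in> pres_rel A R \<Longrightarrow> (u @ u', v @ v') \<in> pres_rel A R"

definition pres_group :: "'a set \<Rightarrow> ('a word \<times> 'a word) set \<Rightarrow> 'a word set monoid" where
  "pres_group A R = \<lparr> carrier = lists (A \<times> UNIV) // pres_rel A R,
     mult = (\<lambda>X Y. pres_rel A R `` {(SOME x. x \<in> X) @ (SOME y. y \<in> Y)}),
     one = pres_rel A R `` {[]} \<rparr>"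

datatype gen = g nat | s nat

definition gens :: "nat \<Rightarrow> gen set" where
  "gens n = {g i | i. 1 \<le> i \<and> i \<le> n} \<union> {s i | i. 1 \<le> i \<and> i \<le> n - 1}"

abbreviation (input) pos :: "gen \<Rightarrow> gen \<times> bool" where "pos x \<equiv> (x, False)"
abbreviation (input) neg :: "gen \<Rightarrow> gen \<times> bool" where "neg x \<equiv> (x, True)"

definition rels :: "nat \<Rightarrow> (gen word \<times> gen word) set" where
  "rels n =
     {([pos (s i), pos (s j)], [pos (s j), pos (s i)]) | i j.
         1 \<le> i \<and> i \<le> n - 1 \<and> 1 \<le> j \<and> j \<le> n - 1 \<and> (i + 1 < j \<or> j + 1 < i)}
   \<union> {([pos (s i), pos (s j), pos (s i)], [pos (s j), pos (s i), pos (s j)]) | i j.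
         1 \<le> i \<and> i \<le> n - 1 \<and> 1 \<le> j \<and> j \<le> n - 1 \<and> (i = j + 1 \<or> j = i + 1)}
   \<union> {([pos (g (i + 1)), pos (s i)], [pos (s i), pos (g i)]) | i. 1 \<le> i \<and> i \<le> n - 1}
   \<union> {([pos (g i), pos (s i)], [pos (s i), pos (g i), pos (g (i + 1)), neg (g i)]) | i.
         1 \<le> i \<and> i \<le> n - 1}
   \<union> {([pos (g j), pos (s i)], [pos (s i), pos (g j)]) | i j.
         1 \<le> i \<and> i \<le> n - 1 \<and> 1 \<le> j \<and> j \<le> n \<and> j \<noteq> i \<and> j \<noteq> i + 1}"

definition FB :: "nat \<Rightarrow> gen word set monoid" where
  "FB n = pres_group (gens n) (rels n)"

definition elem :: "nat \<Rightarrow> gen \<Rightarrow> gen word set" where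
  "elem n x = pres_rel (gens n) (rels n) `` {[pos x]}"

definition braid_sub :: "nat \<Rightarrow> gen word set set" where
  "braid_sub n = generate (FB n) {elem n (s i) | i. 1 \<le> i \<and> i \<le> n - 1}"

definition free_sub :: "nat \<Rightarrow> gen word set set" where
  "free_sub n = generate (FB n) {elem n (g i) | i. 1 \<le> i \<and> i \<le> n}"

definition FnG :: "nat \<Rightarrow> gen word set set \<Rightarrow> gen word set set" where
  "FnG n G = generate (FB n) (free_sub n \<union> G)"

type_synonym grelt = "gen word set \<Rightarrow> int"

definition gr_supp :: "grelt \<Rightarrow> gen word set set" where
  "gr_supp x = {\<gamma>. x \<gamma> \<noteq> 0}"

definition in_group_ring :: "gen word set set \<Rightarrow> grelt \<Rightarrow> bool" where
  "in_group_ring H x \<longleftrightarrow> finite (gr_supp x) \<and> gr_supp x \<subseteq> H"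

definition gr_of :: "gen word set \<Rightarrow> grelt" where
  "gr_of \<gamma> = (\<lambda>\<delta>. if \<delta> = \<gamma> then 1 else 0)"

definition gr_zero :: grelt where "gr_zero = (\<lambda>_. 0)"

definition gr_one :: "nat \<Rightarrow> grelt" where "gr_one n = gr_of (\<one>\<^bsub>FB n\<^esub>)"

definition gr_diff :: "grelt \<Rightarrow> grelt \<Rightarrow> grelt" where
  "gr_diff x y = (\<lambda>\<gamma>. x \<gamma> - y \<gamma>)"

definition gr_mult :: "nat \<Rightarrow> grelt \<Rightarrow> grelt \<Rightarrow> grelt" where
  "gr_mult n x y = (\<lambda>\<gamma>. \<Sum>(\<alpha>, \<beta>) \<in> gr_supp x \<times> gr_supp y.
      if \<alpha> \<otimes>\<^bsub>FB n\<^esub> \<beta> = \<gamma> then x \<alpha> * y \<beta> else 0)"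

section \<open>n x n matrices over Z[F_n \<rtimes> B_n] (indices 0..n-1, zero outside)\<close>

type_synonym grmat = "nat \<Rightarrow> nat \<Rightarrow> grelt"

definition gm_mult :: "nat \<Rightarrow> grmat \<Rightarrow> grmat \<Rightarrow> grmat" where
  "gm_mult n A B = (\<lambda>k l \<gamma>. \<Sum>m<n. gr_mult n (A k m) (B m l) \<gamma>)"

definition gm_one :: "nat \<Rightarrow> grmat" where
  "gm_one n = (\<lambda>k l. if k = l \<and> k < n then gr_one n else gr_zero)"

definition gm_wf :: "nat \<Rightarrow> grmat \<Rightarrow> bool" where
  "gm_wf n A \<longleftrightarrow> (\<forall>k l. in_group_ring (carrier (FB n)) (A k l))
       \<and> (\<forall>k l. (n \<le> k \<or> n \<le> l) \<longrightarrow> A k l = gr_zero)"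

text \<open>R_i = [[0, g_i], [1, 1 - g_i]] placed at rows/columns i-1, i (0-based),
  i.e. diag(I_{i-1}, R_i, I_{n-i-1}).\<close>
definition diagR :: "nat \<Rightarrow> nat \<Rightarrow> grmat" where
  "diagR n i = (\<lambda>k l.
     if n \<le> k \<or> n \<le> l then gr_zero
     else if k = i - 1 \<and> l = i - 1 then gr_zero
     else if k = i - 1 \<and> l = i then gr_of (elem n (g i))
     else if k = i \<and> l = i - 1 then gr_one n
     else if k = i \<and> l = i then gr_diff (gr_one n) (gr_of (elem n (g i)))
     else if k = l then gr_one n else gr_zero)"

text \<open>phi(sigma_i) = sigma_i \<cdot> diag(I_{i-1}, R_i, I_{n-i-1}) (sigma_i multiplying each entry on the left).\<close>
definition phi_gen :: "nat \<Rightarrow> nat \<Rightarrow> grmat" where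
  "phi_gen n i = (\<lambda>k l. gr_mult n (gr_of (elem n (s i))) (diagR n i k l))"

definition phi_gen_inv :: "nat \<Rightarrow> nat \<Rightarrow> grmat" where
  "phi_gen_inv n i = (THE M. gm_wf n M \<and> gm_mult n (phi_gen n i) M = gm_one n
                                      \<and> gm_mult n M (phi_gen n i) = gm_one n)"

fun phi_letter :: "nat \<Rightarrow> gen \<times> bool \<Rightarrow> grmat" where
  "phi_letter n (s i, False) = phi_gen n i"
| "phi_letter n (s i, True) = phi_gen_inv n i"
| "phi_letter n (g i, _) = gm_one n"

definition phi_word :: "nat \<Rightarrow> gen word \<Rightarrow> grmat" where
  "phi_word n w = foldr (\<lambda>a M. gm_mult n (phi_letter n a) M) w (gm_one n)"

definition phi :: "nat \<Rightarrow> gen word set \<Rightarrow> grmat" where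
  "phi n \<beta> = phi_word n (SOME w. w \<in> lists ({s i | i. 1 \<le> i \<and> i \<le> n - 1} \<times> UNIV)
                                  \<and> pres_rel (gens n) (rels n) `` {w} = \<beta>)"

definition is_rep :: "nat \<Rightarrow> gen word set set \<Rightarrow> nat \<Rightarrow> (gen word set \<Rightarrow> complex mat) \<Rightarrow> bool" where
  "is_rep n H d \<rho> \<longleftrightarrow>
     (\<forall>x\<in>H. \<rho> x \<in> carrier_mat d d \<and> invertible_mat (\<rho> x))
     \<and> (\<forall>x\<in>H. \<forall>y\<in>H. \<rho> (x \<otimes>\<^bsub>FB n\<^esub> y) = \<rho> x * \<rho> y)"

definition rho_lin :: "nat \<Rightarrow> (gen word set \<Rightarrow> complex mat) \<Rightarrow> grelt \<Rightarrow> complex mat" where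
  "rho_lin d \<rho> x = mat d d (\<lambda>(a, b). \<Sum>\<gamma>\<in>gr_supp x. of_int (x \<gamma>) * (\<rho> \<gamma> $$ (a, b)))"

definition rho_plus :: "nat \<Rightarrow> nat \<Rightarrow> (gen word set \<Rightarrow> complex mat) \<Rightarrow> gen word set \<Rightarrow> complex mat" where
  "rho_plus n d \<rho> \<beta> = mat (n * d) (n * d)
     (\<lambda>(a, b). rho_lin d \<rho> (phi n \<beta> (a div d) (b div d)) $$ (a mod d, b mod d))"

end

theory Submission
  imports Defs "HOL-Library.Function_Algebras"
begin


definition invw :: "'a word \<Rightarrow> 'a word" where
  "invw w = rev (map (\<lambda>(a,b). (a, \<not> b)) w)"

lemma invw_simps[simp]: "invw [] = []" "invw (x # w) = invw w @ [(fst x, \<not> snd x)]"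
  "invw (u @ v) = invw v @ invw u"
  by (auto simp: invw_def case_prod_beta comp_def)

lemma invw_invw[simp]: "invw (invw w) = w"
  by (induction w) auto

lemma invw_lists[simp]: "invw w \<in> lists (A \<times> UNIV) \<longleftrightarrow> w \<in> lists (A \<times> UNIV)"
  by (auto simp: invw_def)

lemma pres_rel_lists: "(u,v) \<in> pres_rel A R \<Longrightarrow> u \<in> lists (A \<times> UNIV) \<and> v \<in> lists (A \<times> UNIV)"
  by (induction rule: pres_rel.induct) auto

lemma pres_equiv: "equiv (lists (A \<times> UNIV)) (pres_rel A R)"
proof (rule equivI)
  show "pres_rel A R \<subseteq> lists (A \<times> UNIV) \<times> lists (A \<times> UNIV)"
    using pres_rel_lists by fast
  show "refl_on (lists (A \<times> UNIV)) (pres_rel A R)"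
    unfolding refl_on_def by (blast intro: pres_rel.refl)
  show "sym (pres_rel A R)" unfolding sym_def by (blast intro: pres_rel.sym)
  show "trans (pres_rel A R)" unfolding trans_def by (blast intro: pres_rel.trans)
qed

lemma pres_cong_app: "(u,v) \<in> pres_rel A R \<Longrightarrow> w \<in> lists (A \<times> UNIV) \<Longrightarrow> (u @ w, v @ w) \<in> pres_rel A R"
  by (blast intro: pres_rel.intros)
lemma pres_cong_pre: "(u,v) \<in> pres_rel A R \<Longrightarrow> w \<in> lists (A \<times> UNIV) \<Longrightarrow> (w @ u, w @ v) \<in> pres_rel A R"
  by (blast intro: pres_rel.intros)

lemma invw_cancel: "w \<in> lists (A \<times> UNIV) \<Longrightarrow> (w @ invw w, []) \<in> pres_rel A R"
proof (induction w)
  case Nil then show ?case by (auto intro: pres_rel.intros)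
next
  case (Cons x w)
  obtain a b where x: "x = (a,b)" by force
  have a: "a \<in> A" using Cons x by auto
  have 1: "(w @ invw w @ [(a, \<not> b)], [(a, \<not> b)]) \<in> pres_rel A R"
    using pres_cong_app[OF Cons.IH[simplified], of "[(a, \<not> b)]"] Cons a x by simp
  have 2: "([(a,b)] @ (w @ invw w @ [(a, \<not> b)]), [(a,b)] @ [(a, \<not> b)]) \<in> pres_rel A R"
    using pres_cong_pre[OF 1, of "[(a,b)]"] a by auto
  have 3: "([(a,b), (a, \<not> b)], []) \<in> pres_rel A R" using a by (rule pres_rel.cancel)
  have 2: "((a,b) # w @ invw w @ [(a, \<not> b)], [(a,b), (a, \<not> b)]) \<in> pres_rel A R"
    using 2 by simp
  show ?case using pres_rel.trans[OF 2 3] x by simp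
qed

lemma invw_cancel2: "w \<in> lists (A \<times> UNIV) \<Longrightarrow> (invw w @ w, []) \<in> pres_rel A R"
  using invw_cancel[of "invw w" A R] by simp

abbreviation cls :: "'a set \<Rightarrow> ('a word \<times> 'a word) set \<Rightarrow> 'a word \<Rightarrow> 'a word set" where
  "cls A R w \<equiv> pres_rel A R `` {w}"

lemma cls_eq_iff: "u \<in> lists (A \<times> UNIV) \<Longrightarrow> v \<in> lists (A \<times> UNIV) \<Longrightarrow>
   cls A R u = cls A R v \<longleftrightarrow> (u,v) \<in> pres_rel A R"
  using pres_equiv by (metis equiv_class_eq_iff)

lemma cls_eqI: "(u,v) \<in> pres_rel A R \<Longrightarrow> cls A R u = cls A R v"
  using pres_equiv equiv_class_eq by metis

lemma in_cls: "u \<in> lists (A \<times> UNIV) \<Longrightarrow> u \<in> cls A R u"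
  using pres_equiv by (metis equiv_class_self)

lemma pres_carrier: "carrier (pres_group A R) = {cls A R w | w. w \<in> lists (A \<times> UNIV)}"
  by (auto simp: pres_group_def quotient_def)

lemma pres_one: "\<one>\<^bsub>pres_group A R\<^esub> = cls A R []"
  by (simp add: pres_group_def)

lemma pres_mult: "u \<in> lists (A \<times> UNIV) \<Longrightarrow> v \<in> lists (A \<times> UNIV) \<Longrightarrow>
   cls A R u \<otimes>\<^bsub>pres_group A R\<^esub> cls A R v = cls A R (u @ v)"
proof -
  assume u: "u \<in> lists (A \<times> UNIV)" and v: "v \<in> lists (A \<times> UNIV)"
  define x where "x = (SOME x. x \<in> cls A R u)"
  define y where "y = (SOME y. y \<in> cls A R v)"
  have "x \<in> cls A R u" unfolding x_def by (rule someI, rule in_cls[OF u])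
  hence hx: "(u,x) \<in> pres_rel A R" by simp
  have "y \<in> cls A R v" unfolding y_def by (rule someI, rule in_cls[OF v])
  hence hy: "(v,y) \<in> pres_rel A R" by simp
  have "(x @ y, u @ v) \<in> pres_rel A R"
    using pres_rel.cong[OF pres_rel.sym[OF hx] pres_rel.sym[OF hy]] .
  then show ?thesis unfolding pres_group_def using cls_eqI x_def y_def by simp
qed

lemma pres_group_is_group: "group (pres_group A R)"
proof (rule groupI)
  fix x y assume "x \<in> carrier (pres_group A R)" "y \<in> carrier (pres_group A R)"
  then obtain u v where "u \<in> lists (A \<times> UNIV)" "v \<in> lists (A \<times> UNIV)"
    "x = cls A R u" "y = cls A R v" unfolding pres_carrier by blast
  then show "x \<otimes>\<^bsub>pres_group A R\<^esub> y \<in> carrier (pres_group A R)"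
    unfolding pres_carrier using pres_mult[of u A v R] by (metis (mono_tags, lifting) append_in_lists_conv mem_Collect_eq)
next
  show "\<one>\<^bsub>pres_group A R\<^esub> \<in> carrier (pres_group A R)"
    by (auto simp: pres_carrier pres_one)
next
  fix x y z assume "x \<in> carrier (pres_group A R)" "y \<in> carrier (pres_group A R)" "z \<in> carrier (pres_group A R)"
  then obtain u v w where uvw: "u \<in> lists (A \<times> UNIV)" "v \<in> lists (A \<times> UNIV)" "w \<in> lists (A \<times> UNIV)"
    "x = cls A R u" "y = cls A R v" "z = cls A R w" unfolding pres_carrier by blast
  have uv: "u @ v \<in> lists (A \<times> UNIV)" "v @ w \<in> lists (A \<times> UNIV)" using uvw by auto
  show "x \<otimes>\<^bsub>pres_group A R\<^esub> y \<otimes>\<^bsub>pres_group A R\<^esub> z =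
    x \<otimes>\<^bsub>pres_group A R\<^esub> (y \<otimes>\<^bsub>pres_group A R\<^esub> z)"
    unfolding uvw(4-6) pres_mult[OF uvw(1,2)] pres_mult[OF uvw(2,3)] pres_mult[OF uv(1) uvw(3)]
     pres_mult[OF uvw(1) uv(2)] by simp
next
  fix x assume "x \<in> carrier (pres_group A R)"
  then obtain u where u: "u \<in> lists (A \<times> UNIV)" "x = cls A R u" unfolding pres_carrier by blast
  show "\<one>\<^bsub>pres_group A R\<^esub> \<otimes>\<^bsub>pres_group A R\<^esub> x = x"
    unfolding u(2) pres_one using pres_mult[OF _ u(1), of "[]"] by simp
next
  fix x assume "x \<in> carrier (pres_group A R)"
  then obtain w where w: "w \<in> lists (A \<times> UNIV)" "x = cls A R w" unfolding pres_carrier by blast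
  have iw: "invw w \<in> lists (A \<times> UNIV)" using w(1) by (simp only: invw_lists)
  show "\<exists>y\<in>carrier (pres_group A R). y \<otimes>\<^bsub>pres_group A R\<^esub> x = \<one>\<^bsub>pres_group A R\<^esub>"
  proof (rule bexI[of _ "cls A R (invw w)"])
    have "cls A R (invw w @ w) = cls A R []" by (rule cls_eqI[OF invw_cancel2[OF w(1)]])
    then show "cls A R (invw w) \<otimes>\<^bsub>pres_group A R\<^esub> x = \<one>\<^bsub>pres_group A R\<^esub>"
      unfolding w(2) pres_mult[OF iw w(1)] pres_one .
    show "cls A R (invw w) \<in> carrier (pres_group A R)" unfolding pres_carrier using iw by blast
  qed
qed

lemma pres_inv: "w \<in> lists (A \<times> UNIV) \<Longrightarrow> inv\<^bsub>pres_group A R\<^esub> (cls A R w) = cls A R (invw w)"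
proof -
  assume w: "w \<in> lists (A \<times> UNIV)"
  interpret group "pres_group A R" by (rule pres_group_is_group)
  have cc: "cls A R (invw w @ w) = cls A R []" by (rule cls_eqI[OF invw_cancel2[OF w]])
  have iw: "invw w \<in> lists (A \<times> UNIV)" using w by (simp only: invw_lists)
  have "cls A R (invw w) \<otimes>\<^bsub>pres_group A R\<^esub> cls A R w = \<one>\<^bsub>pres_group A R\<^esub>"
    unfolding pres_mult[OF iw w] pres_one by (rule cc)
  moreover have "cls A R w \<in> carrier (pres_group A R)" "cls A R (invw w) \<in> carrier (pres_group A R)"
    unfolding pres_carrier using w iw by blast+
  ultimately show ?thesis by (intro inv_equality)
qed


lemma FB_group: "group (FB n)" unfolding FB_def by (rule pres_group_is_group)

abbreviation GR :: "nat \<Rightarrow> grelt \<Rightarrow> bool" where "GR n x \<equiv> in_group_ring (carrier (FB n)) x"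
abbreviation fs :: "grelt \<Rightarrow> bool" where "fs x \<equiv> finite (gr_supp x)"

definition sm :: "int \<Rightarrow> grelt \<Rightarrow> grelt" where "sm c x = (\<lambda>\<gamma>. c * x \<gamma>)"

lemma fun_sum_apply: "(\<Sum>i\<in>I. f i) x = (\<Sum>i\<in>I. f i x)"
  by (induction I rule: infinite_finite_induct) auto

lemma supp_add: "gr_supp (x + y) \<subseteq> gr_supp x \<union> gr_supp y" by (auto simp: gr_supp_def)
lemma supp_diff: "gr_supp (x - y) \<subseteq> gr_supp x \<union> gr_supp y" by (auto simp: gr_supp_def)
lemma supp_sm: "gr_supp (sm c x) \<subseteq> gr_supp x" by (auto simp: gr_supp_def sm_def)
lemma supp_of[simp]: "gr_supp (gr_of a) = {a}" by (auto simp: gr_supp_def gr_of_def)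
lemma supp_zero[simp]: "gr_supp 0 = {}" by (auto simp: gr_supp_def)
lemma gr_zero_eq: "gr_zero = 0" by (auto simp: gr_zero_def)
lemma gr_diff_eq: "gr_diff x y = x - y" by (auto simp: gr_diff_def)
lemma supp_sum: "gr_supp (\<Sum>i\<in>I. f i) \<subseteq> (\<Union>i\<in>I. gr_supp (f i))"
  by (auto simp: gr_supp_def fun_sum_apply intro: ccontr elim!: sum.not_neutral_contains_not_neutral)

lemma fs_add: "fs x \<Longrightarrow> fs y \<Longrightarrow> fs (x + y)" using supp_add finite_subset by blast
lemma fs_diff: "fs x \<Longrightarrow> fs y \<Longrightarrow> fs (x - y)" using supp_diff finite_subset by blast
lemma fs_sm: "fs x \<Longrightarrow> fs (sm c x)" using supp_sm finite_subset by blast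
lemma fs_sum: "finite I \<Longrightarrow> (\<And>i. i \<in> I \<Longrightarrow> fs (f i)) \<Longrightarrow> fs (\<Sum>i\<in>I. f i)"
  using supp_sum finite_subset by (metis (no_types, lifting) finite_UN_I)

lemma if_add0: "(if P then a + b else 0) = (if P then a else 0) + (if P then b else (0::int))" by simp
lemma if_mult01: "(c::int) * (if P then 1 else 0) = (if P then c else 0)" by simp
lemma if_sm0: "(if P then c * a else 0) = (c::int) * (if P then a else 0)" by simp

definition fbm :: "nat \<Rightarrow> gen word set \<Rightarrow> gen word set \<Rightarrow> gen word set" where
  "fbm n a b = a \<otimes>\<^bsub>FB n\<^esub> b"

lemma gr_mult_sup:
  assumes "finite S" "finite T" "gr_supp x \<subseteq> S" "gr_supp y \<subseteq> T"
  shows "gr_mult n x y \<gamma> = (\<Sum>a\<in>S. \<Sum>b\<in>T. if fbm n a b = \<gamma> then x a * y b else 0)"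
proof -
  have fx: "finite (gr_supp x)" "finite (gr_supp y)" using assms finite_subset by auto
  have "gr_mult n x y \<gamma> = (\<Sum>(a,b)\<in>S\<times>T. if fbm n a b = \<gamma> then x a * y b else 0)"
    unfolding gr_mult_def fbm_def[symmetric]
  proof (rule sum.mono_neutral_left)
    show "finite (S \<times> T)" using assms by auto
    show "gr_supp x \<times> gr_supp y \<subseteq> S \<times> T" using assms by auto
    show "\<forall>i\<in>S \<times> T - gr_supp x \<times> gr_supp y. (case i of (\<alpha>, \<beta>) \<Rightarrow> if fbm n \<alpha> \<beta> = \<gamma> then x \<alpha> * y \<beta> else 0) = 0"
    proof
      fix i assume "i \<in> S \<times> T - gr_supp x \<times> gr_supp y"
      then obtain a b where i: "i = (a,b)" and "x a = 0 \<or> y b = 0" by (auto simp: gr_supp_def)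
      then show "(case i of (\<alpha>, \<beta>) \<Rightarrow> if fbm n \<alpha> \<beta> = \<gamma> then x \<alpha> * y \<beta> else 0) = 0" by auto
    qed
  qed
  then show ?thesis by (simp add: sum.cartesian_product)
qed

lemma gr_mult_expand:
  assumes "finite S" "finite T" "gr_supp x \<subseteq> S" "gr_supp y \<subseteq> T"
  shows "gr_mult n x y = (\<Sum>a\<in>S. \<Sum>b\<in>T. sm (x a * y b) (gr_of (fbm n a b)))"
  by (rule ext, simp add: gr_mult_sup[OF assms] fun_sum_apply sm_def gr_of_def if_mult01 eq_commute)

lemma supp_mult: "gr_supp (gr_mult n x y) \<subseteq> (\<lambda>(a,b). a \<otimes>\<^bsub>FB n\<^esub> b) ` (gr_supp x \<times> gr_supp y)"
  unfolding gr_mult_def gr_supp_def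
  by (auto intro: ccontr elim!: sum.not_neutral_contains_not_neutral split: if_splits)

lemma fs_mult: "fs x \<Longrightarrow> fs y \<Longrightarrow> fs (gr_mult n x y)"
  using supp_mult finite_subset by (metis finite_SigmaI finite_imageI)

lemma GR_mult: "GR n x \<Longrightarrow> GR n y \<Longrightarrow> GR n (gr_mult n x y)"
proof -
  interpret G: group "FB n" by (rule FB_group)
  assume x: "GR n x" and y: "GR n y"
  have "(\<lambda>(a,b). a \<otimes>\<^bsub>FB n\<^esub> b) ` (gr_supp x \<times> gr_supp y) \<subseteq> carrier (FB n)"
    using x y unfolding in_group_ring_def by auto
  then have "gr_supp (gr_mult n x y) \<subseteq> carrier (FB n)" by (rule order_trans[OF supp_mult])
  moreover have "fs (gr_mult n x y)" using x y unfolding in_group_ring_def by (intro fs_mult) auto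
  ultimately show ?thesis unfolding in_group_ring_def by simp
qed

lemma GR_add: "GR n x \<Longrightarrow> GR n y \<Longrightarrow> GR n (x + y)"
  unfolding in_group_ring_def using supp_add fs_add by blast
lemma GR_diff: "GR n x \<Longrightarrow> GR n y \<Longrightarrow> GR n (x - y)"
  unfolding in_group_ring_def using supp_diff fs_diff by blast
lemma GR_sm: "GR n x \<Longrightarrow> GR n (sm c x)"
  unfolding in_group_ring_def using supp_sm fs_sm by blast
lemma GR_zero[simp]: "GR n 0" by (simp add: in_group_ring_def)
lemma GR_of: "a \<in> carrier (FB n) \<Longrightarrow> GR n (gr_of a)" by (simp add: in_group_ring_def)
lemma GR_sum: "finite I \<Longrightarrow> (\<And>i. i \<in> I \<Longrightarrow> GR n (f i)) \<Longrightarrow> GR n (\<Sum>i\<in>I. f i)"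
  unfolding in_group_ring_def using fs_sum supp_sum by (metis (no_types, lifting) UN_least subset_trans)

lemma gr_of_self[simp]: "gr_of a a = 1" by (simp add: gr_of_def)
lemma sm_one[simp]: "sm 1 x = x" by (simp add: sm_def)

lemma gr_mult_of: "gr_mult n (gr_of a) (gr_of b) = gr_of (a \<otimes>\<^bsub>FB n\<^esub> b)"
  by (subst gr_mult_expand[of "{a}" "{b}"]) (simp_all add: fbm_def)

lemma gr_mult_add_left: "fs x \<Longrightarrow> fs y \<Longrightarrow> fs z \<Longrightarrow> gr_mult n (x + y) z = gr_mult n x z + gr_mult n y z"
  apply (rule ext, simp only: plus_fun_apply)
  apply (subst (1 2 3) gr_mult_sup[of "gr_supp x \<union> gr_supp y" "gr_supp z"])
  using supp_add[of x y] unfolding plus_fun_apply apply (simp_all only: finite_Un subset_refl Un_upper1 Un_upper2 simp_thms)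
  apply (simp only: sum.distrib[symmetric])
  apply (rule sum.cong[OF HOL.refl])+
  by (simp (no_asm) add: distrib_right)

lemma gr_mult_add_right: "fs x \<Longrightarrow> fs y \<Longrightarrow> fs z \<Longrightarrow> gr_mult n z (x + y) = gr_mult n z x + gr_mult n z y"
  apply (rule ext, simp only: plus_fun_apply)
  apply (subst (1 2 3) gr_mult_sup[of "gr_supp z" "gr_supp x \<union> gr_supp y"])
  using supp_add[of x y] unfolding plus_fun_apply apply (simp_all only: finite_Un subset_refl Un_upper1 Un_upper2 simp_thms)
  apply (simp only: sum.distrib[symmetric])
  apply (rule sum.cong[OF HOL.refl])+
  by (simp (no_asm) add: distrib_left)

lemma gr_mult_sm_left: "fs x \<Longrightarrow> fs z \<Longrightarrow> gr_mult n (sm c x) z = sm c (gr_mult n x z)"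
  apply (rule ext, simp only: sm_def[of c "gr_mult n _ _"])
  apply (subst (1 2) gr_mult_sup[of "gr_supp x" "gr_supp z"])
  using supp_sm[of c x] apply (simp_all only: subset_refl simp_thms)
  apply (simp only: sum_distrib_left)
  apply (rule sum.cong[OF HOL.refl])+
  by (simp (no_asm) add: sm_def)

lemma gr_mult_sm_right: "fs x \<Longrightarrow> fs z \<Longrightarrow> gr_mult n z (sm c x) = sm c (gr_mult n z x)"
  apply (rule ext, simp only: sm_def[of c "gr_mult n _ _"])
  apply (subst (1 2) gr_mult_sup[of "gr_supp z" "gr_supp x"])
  using supp_sm[of c x] apply (simp_all only: subset_refl simp_thms)
  apply (simp only: sum_distrib_left)
  apply (rule sum.cong[OF HOL.refl])+
  by (simp (no_asm) add: sm_def)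

lemma gr_mult_zero_left[simp]: "gr_mult n 0 z = 0"
  by (rule ext) (simp add: gr_mult_def gr_supp_def zero_fun_apply)
lemma gr_mult_zero_left'[simp]: "gr_mult n (\<lambda>a. 0) z = (\<lambda>a. 0)"
  by (rule ext) (simp add: gr_mult_def gr_supp_def)
lemma gr_mult_zero_right'[simp]: "gr_mult n z (\<lambda>a. 0) = (\<lambda>a. 0)"
  by (rule ext) (simp add: gr_mult_def gr_supp_def)
lemma gr_mult_zero_right[simp]: "gr_mult n z 0 = 0"
  by (rule ext) (simp add: gr_mult_def gr_supp_def zero_fun_apply)

lemma gr_mult_sum_left: "finite I \<Longrightarrow> (\<And>i. i \<in> I \<Longrightarrow> fs (f i)) \<Longrightarrow> fs z \<Longrightarrow>
   gr_mult n (\<Sum>i\<in>I. f i) z = (\<Sum>i\<in>I. gr_mult n (f i) z)"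
proof (induction I rule: finite_induct)
  case empty then show ?case by simp
next
  case (insert i I)
  have fi: "fs (f i)" using insert.prems(1) by simp
  have fI: "fs (\<Sum>i\<in>I. f i)" using insert.prems(1) insert.hyps(1) by (intro fs_sum) auto
  have IH: "gr_mult n (\<Sum>i\<in>I. f i) z = (\<Sum>i\<in>I. gr_mult n (f i) z)" using insert.IH insert.prems by simp
  show ?case unfolding sum.insert[OF insert.hyps] gr_mult_add_left[OF fi fI insert.prems(2)] IH ..
qed

lemma gr_mult_sum_right: "finite I \<Longrightarrow> (\<And>i. i \<in> I \<Longrightarrow> fs (f i)) \<Longrightarrow> fs z \<Longrightarrow>
   gr_mult n z (\<Sum>i\<in>I. f i) = (\<Sum>i\<in>I. gr_mult n z (f i))"
proof (induction I rule: finite_induct)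
  case empty then show ?case by simp
next
  case (insert i I)
  have fi: "fs (f i)" using insert.prems(1) by simp
  have fI: "fs (\<Sum>i\<in>I. f i)" using insert.prems(1) insert.hyps(1) by (intro fs_sum) auto
  have IH: "gr_mult n z (\<Sum>i\<in>I. f i) = (\<Sum>i\<in>I. gr_mult n z (f i))" using insert.IH insert.prems by simp
  show ?case unfolding sum.insert[OF insert.hyps] gr_mult_add_right[OF fi fI insert.prems(2)] IH ..
qed

lemma sm_sum: "sm c (\<Sum>i\<in>I. f i) = (\<Sum>i\<in>I. sm c (f i))"
  by (rule ext) (simp add: sm_def fun_sum_apply sum_distrib_left)
lemma sm_sm: "sm c (sm d x) = sm (c * d) x" by (auto simp: sm_def)

lemma gr_expand: "fs x \<Longrightarrow> x = (\<Sum>a\<in>gr_supp x. sm (x a) (gr_of a))"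
  by (rule ext) (simp add: fun_sum_apply sm_def gr_of_def if_mult01 gr_supp_def)

lemma sum3_swap: "(\<Sum>c\<in>C. \<Sum>a\<in>A. \<Sum>b\<in>B. f a b c) = (\<Sum>a\<in>A. \<Sum>b\<in>B. \<Sum>c\<in>C. (f a b c :: 'x::comm_monoid_add))"
proof -
  have "(\<Sum>c\<in>C. \<Sum>a\<in>A. \<Sum>b\<in>B. f a b c) = (\<Sum>a\<in>A. \<Sum>c\<in>C. \<Sum>b\<in>B. f a b c)" by (rule sum.swap)
  also have "\<dots> = (\<Sum>a\<in>A. \<Sum>b\<in>B. \<Sum>c\<in>C. f a b c)" by (rule sum.cong[OF HOL.refl], rule sum.swap)
  finally show ?thesis .
qed

lemma sum3_swap2: "(\<Sum>a\<in>A. \<Sum>b\<in>B. \<Sum>c\<in>C. f a b c) = (\<Sum>b\<in>B. \<Sum>c\<in>C. \<Sum>a\<in>A. (f a b c :: 'x::comm_monoid_add))"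
  using sum3_swap[where f="\<lambda>b c a. f a b c" and C=A and A=B and B=C] .

lemma gr_mult_assoc:
  assumes x: "GR n x" and y: "GR n y" and z: "GR n z"
  shows "gr_mult n (gr_mult n x y) z = gr_mult n x (gr_mult n y z)"
proof -
  interpret G: group "FB n" by (rule FB_group)
  let ?S = "gr_supp x" and ?T = "gr_supp y" and ?U = "gr_supp z"
  have f: "finite ?S" "finite ?T" "finite ?U" "?S \<subseteq> carrier (FB n)" "?T \<subseteq> carrier (FB n)" "?U \<subseteq> carrier (FB n)"
    using x y z by (auto simp: in_group_ring_def)
  have ex: "x = (\<Sum>a\<in>?S. sm (x a) (gr_of a))" by (rule gr_expand, rule f)
  have ez: "z = (\<Sum>a\<in>?U. sm (z a) (gr_of a))" by (rule gr_expand, rule f)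
  have exy: "gr_mult n x y = (\<Sum>a\<in>?S. \<Sum>b\<in>?T. sm (x a * y b) (gr_of (fbm n a b)))"
    by (rule gr_mult_expand) (use f in auto)
  have eyz: "gr_mult n y z = (\<Sum>a\<in>?T. \<Sum>b\<in>?U. sm (y a * z b) (gr_of (fbm n a b)))"
    by (rule gr_mult_expand) (use f in auto)
  have "gr_mult n (gr_mult n x y) z = gr_mult n (\<Sum>a\<in>?S. \<Sum>b\<in>?T. sm (x a * y b) (gr_of (fbm n a b))) (\<Sum>a\<in>?U. sm (z a) (gr_of a))"
    using exy ez by (rule arg_cong2)
  also have "\<dots> = (\<Sum>a\<in>?S. \<Sum>b\<in>?T. \<Sum>c\<in>?U. sm (x a * y b * z c) (gr_of (fbm n (fbm n a b) c)))"
    apply (simp add: gr_mult_sum_left gr_mult_sum_right fs_sum fs_sm gr_mult_sm_left gr_mult_sm_right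
        fs_mult f gr_mult_of[folded fbm_def] sm_sm sum_distrib_left sm_sum)
    apply (subst sum3_swap)
    apply (simp add: mult_ac)
    done
  also have "\<dots> = (\<Sum>a\<in>?S. \<Sum>b\<in>?T. \<Sum>c\<in>?U. sm (x a * y b * z c) (gr_of (fbm n a (fbm n b c))))"
    by (intro sum.cong HOL.refl) (use f in \<open>auto simp: G.m_assoc subset_iff fbm_def\<close>)
  also have "\<dots> = gr_mult n (\<Sum>a\<in>?S. sm (x a) (gr_of a)) (\<Sum>a\<in>?T. \<Sum>b\<in>?U. sm (y a * z b) (gr_of (fbm n a b)))"
    apply (simp add: gr_mult_sum_left gr_mult_sum_right fs_sum fs_sm gr_mult_sm_left gr_mult_sm_right
        fs_mult f gr_mult_of[folded fbm_def] sm_sm sum_distrib_left sm_sum)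
    apply (subst sum3_swap2)
    apply (simp add: mult_ac)
    done
  also have "\<dots> = gr_mult n x (gr_mult n y z)"
    using ex eyz by (rule arg_cong2[symmetric])
  finally show ?thesis .
qed


lemma gr_one_eq: "gr_one n = gr_of \<one>\<^bsub>FB n\<^esub>" by (simp add: gr_one_def)

lemma gr_mult_one_left: assumes x: "GR n x" shows "gr_mult n (gr_one n) x = x"
proof -
  interpret G: group "FB n" by (rule FB_group)
  have f: "fs x" "gr_supp x \<subseteq> carrier (FB n)" using x by (auto simp: in_group_ring_def)
  have ex: "x = (\<Sum>a\<in>gr_supp x. sm (x a) (gr_of a))" by (rule gr_expand, rule f)
  have "gr_mult n (gr_one n) x = gr_mult n (gr_of \<one>\<^bsub>FB n\<^esub>) (\<Sum>a\<in>gr_supp x. sm (x a) (gr_of a))"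
    unfolding gr_one_eq using ex by (rule arg_cong)
  also have "\<dots> = (\<Sum>a\<in>gr_supp x. sm (x a) (gr_of (\<one>\<^bsub>FB n\<^esub> \<otimes>\<^bsub>FB n\<^esub> a)))"
    using f by (simp add: gr_mult_sum_right fs_sm gr_mult_sm_right gr_mult_of)
  also have "\<dots> = (\<Sum>a\<in>gr_supp x. sm (x a) (gr_of a))"
    by (intro sum.cong HOL.refl) (use f in auto)
  also have "\<dots> = x" using ex[symmetric] .
  finally show ?thesis .
qed

lemma gr_mult_one_right: assumes x: "GR n x" shows "gr_mult n x (gr_one n) = x"
proof -
  interpret G: group "FB n" by (rule FB_group)
  have f: "fs x" "gr_supp x \<subseteq> carrier (FB n)" using x by (auto simp: in_group_ring_def)
  have ex: "x = (\<Sum>a\<in>gr_supp x. sm (x a) (gr_of a))" by (rule gr_expand, rule f)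
  have "gr_mult n x (gr_one n) = gr_mult n (\<Sum>a\<in>gr_supp x. sm (x a) (gr_of a)) (gr_of \<one>\<^bsub>FB n\<^esub>)"
    unfolding gr_one_eq using ex by (rule arg_cong)
  also have "\<dots> = (\<Sum>a\<in>gr_supp x. sm (x a) (gr_of (a \<otimes>\<^bsub>FB n\<^esub> \<one>\<^bsub>FB n\<^esub>)))"
    using f by (simp add: gr_mult_sum_left fs_sm gr_mult_sm_left gr_mult_of)
  also have "\<dots> = (\<Sum>a\<in>gr_supp x. sm (x a) (gr_of a))"
    by (intro sum.cong HOL.refl) (use f in auto)
  also have "\<dots> = x" using ex[symmetric] .
  finally show ?thesis .
qed

lemma GR_one: "GR n (gr_one n)"
  unfolding gr_one_eq by (rule GR_of, rule monoid.one_closed[OF group.is_monoid[OF FB_group]])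

lemma gm_mult_apply: "gm_mult n A B k l = (\<Sum>m<n. gr_mult n (A k m) (B m l))"
  unfolding gm_mult_def by (rule ext) (simp add: fun_sum_apply)

lemma gm_wfD: "gm_wf n A \<Longrightarrow> GR n (A k l)"
  "gm_wf n A \<Longrightarrow> n \<le> k \<Longrightarrow> A k l = 0" "gm_wf n A \<Longrightarrow> n \<le> l \<Longrightarrow> A k l = 0"
  by (auto simp: gm_wf_def gr_zero_eq)

lemma gm_wfI: "(\<And>k l. GR n (A k l)) \<Longrightarrow> (\<And>k l. n \<le> k \<or> n \<le> l \<Longrightarrow> A k l = 0) \<Longrightarrow> gm_wf n A"
  by (auto simp: gm_wf_def gr_zero_eq)

lemma GR_fs: "GR n x \<Longrightarrow> fs x" by (simp add: in_group_ring_def)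

lemma gm_mult_wf: assumes A: "gm_wf n A" and B: "gm_wf n B" shows "gm_wf n (gm_mult n A B)"
proof (rule gm_wfI)
  fix k l show "GR n (gm_mult n A B k l)" unfolding gm_mult_apply
    by (intro GR_sum GR_mult gm_wfD[OF A] gm_wfD[OF B]) auto
next
  fix k l assume "n \<le> k \<or> n \<le> l"
  then show "gm_mult n A B k l = 0" unfolding gm_mult_apply
  proof
    assume "n \<le> k" then show "(\<Sum>m<n. gr_mult n (A k m) (B m l)) = 0" using gm_wfD(2)[OF A] by simp
  next
    assume "n \<le> l" then show "(\<Sum>m<n. gr_mult n (A k m) (B m l)) = 0" using gm_wfD(3)[OF B] by simp
  qed
qed

lemma gm_one_wf: "gm_wf n (gm_one n)"
  by (rule gm_wfI) (auto simp: gm_one_def GR_one gr_zero_eq)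

lemma gm_mult_assoc: assumes A: "gm_wf n A" and B: "gm_wf n B" and C: "gm_wf n C"
  shows "gm_mult n (gm_mult n A B) C = gm_mult n A (gm_mult n B C)"
proof (rule ext, rule ext)
  fix k l
  have fA: "\<And>k l. fs (A k l)" and fB: "\<And>k l. fs (B k l)" and fC: "\<And>k l. fs (C k l)"
    using gm_wfD(1)[OF A] gm_wfD(1)[OF B] gm_wfD(1)[OF C] GR_fs by blast+
  have "gm_mult n (gm_mult n A B) C k l = (\<Sum>m<n. \<Sum>p<n. gr_mult n (gr_mult n (A k p) (B p m)) (C m l))"
    unfolding gm_mult_apply
    by (intro sum.cong HOL.refl gr_mult_sum_left) (auto intro: fs_mult fA fB fC)
  also have "\<dots> = (\<Sum>m<n. \<Sum>p<n. gr_mult n (A k p) (gr_mult n (B p m) (C m l)))"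
    by (intro sum.cong HOL.refl gr_mult_assoc gm_wfD[OF A] gm_wfD[OF B] gm_wfD[OF C])
  also have "\<dots> = (\<Sum>p<n. \<Sum>m<n. gr_mult n (A k p) (gr_mult n (B p m) (C m l)))"
    by (rule sum.swap)
  also have "\<dots> = gm_mult n A (gm_mult n B C) k l"
    unfolding gm_mult_apply
    by (intro sum.cong HOL.refl gr_mult_sum_right[symmetric]) (auto intro: fs_mult fA fB fC)
  finally show "gm_mult n (gm_mult n A B) C k l = gm_mult n A (gm_mult n B C) k l" .
qed

lemma gm_one_left: assumes A: "gm_wf n A" shows "gm_mult n (gm_one n) A = A"
proof (rule ext, rule ext)
  fix k l
  show "gm_mult n (gm_one n) A k l = A k l"
  proof (cases "k < n")
    case True
    have "gm_mult n (gm_one n) A k l = (\<Sum>m<n. if m = k then gr_mult n (gr_one n) (A k l) else 0)"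
      unfolding gm_mult_apply by (intro sum.cong HOL.refl) (auto simp: gm_one_def gr_zero_eq)
    also have "\<dots> = A k l" using True by (simp add: gr_mult_one_left gm_wfD(1)[OF A])
    finally show ?thesis .
  next
    case False
    then show ?thesis using gm_wfD(2)[OF A, of k l] gm_wfD(2)[OF gm_mult_wf[OF gm_one_wf A], of k l] by simp
  qed
qed

lemma gm_one_right: assumes A: "gm_wf n A" shows "gm_mult n A (gm_one n) = A"
proof (rule ext, rule ext)
  fix k l
  show "gm_mult n A (gm_one n) k l = A k l"
  proof (cases "l < n")
    case True
    have "gm_mult n A (gm_one n) k l = (\<Sum>m<n. if m = l then gr_mult n (A k l) (gr_one n) else 0)"
      unfolding gm_mult_apply by (intro sum.cong HOL.refl) (auto simp: gm_one_def gr_zero_eq)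
    also have "\<dots> = A k l" using True by (simp add: gr_mult_one_right gm_wfD(1)[OF A])
    finally show ?thesis .
  next
    case False
    then show ?thesis using gm_wfD(3)[OF A, where k=k and l=l] gm_wfD(3)[OF gm_mult_wf[OF A gm_one_wf], where k=k and l=l] by simp
  qed
qed


abbreviation Sg :: "nat \<Rightarrow> nat \<Rightarrow> gen word set" where "Sg n i \<equiv> elem n (s i)"
abbreviation Gg :: "nat \<Rightarrow> nat \<Rightarrow> gen word set" where "Gg n i \<equiv> elem n (g i)"

lemma gens_s[simp]: "s i \<in> gens n \<longleftrightarrow> 1 \<le> i \<and> i \<le> n - 1" by (auto simp: gens_def)
lemma gens_g[simp]: "g i \<in> gens n \<longleftrightarrow> 1 \<le> i \<and> i \<le> n" by (auto simp: gens_def)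

lemma FB_mult_cls: "u \<in> lists (gens n \<times> UNIV) \<Longrightarrow> v \<in> lists (gens n \<times> UNIV) \<Longrightarrow>
  cls (gens n) (rels n) u \<otimes>\<^bsub>FB n\<^esub> cls (gens n) (rels n) v = cls (gens n) (rels n) (u @ v)"
  unfolding FB_def by (rule pres_mult)

lemma FB_carrier_cls: "u \<in> lists (gens n \<times> UNIV) \<Longrightarrow> cls (gens n) (rels n) u \<in> carrier (FB n)"
  unfolding FB_def pres_carrier by blast

lemma FB_one_cls: "\<one>\<^bsub>FB n\<^esub> = cls (gens n) (rels n) []"
  unfolding FB_def by (rule pres_one)

lemma elem_carrier: "x \<in> gens n \<Longrightarrow> elem n x \<in> carrier (FB n)"
  unfolding elem_def by (rule FB_carrier_cls) simp

lemma inv_elem: "x \<in> gens n \<Longrightarrow> inv\<^bsub>FB n\<^esub> (elem n x) = cls (gens n) (rels n) [(x, True)]"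
  unfolding elem_def FB_def using pres_inv[of "[(x, False)]" "gens n" "rels n"] by simp

lemma rel_cls: "(u, v) \<in> rels n \<Longrightarrow> u \<in> lists (gens n \<times> UNIV) \<Longrightarrow> v \<in> lists (gens n \<times> UNIV) \<Longrightarrow>
  cls (gens n) (rels n) u = cls (gens n) (rels n) v"
  by (rule cls_eqI, rule pres_rel.rel)

lemma rels_I1: "1 \<le> i \<and> i \<le> n - 1 \<and> 1 \<le> j \<and> j \<le> n - 1 \<and> (i + 1 < j \<or> j + 1 < i) \<Longrightarrow>
  ([(s i, False), (s j, False)], [(s j, False), (s i, False)]) \<in> rels n"
  unfolding rels_def by (rule UnI1, rule UnI1, rule UnI1, rule UnI1, rule CollectI, rule exI[of _ i], rule exI[of _ j]) simp
lemma rels_I2: "1 \<le> i \<and> i \<le> n - 1 \<and> 1 \<le> j \<and> j \<le> n - 1 \<and> (i = j + 1 \<or> j = i + 1) \<Longrightarrow>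
  ([(s i, False), (s j, False), (s i, False)], [(s j, False), (s i, False), (s j, False)]) \<in> rels n"
  unfolding rels_def by (rule UnI1, rule UnI1, rule UnI1, rule UnI2, rule CollectI, rule exI[of _ i], rule exI[of _ j]) simp
lemma rels_I3: "1 \<le> i \<and> i \<le> n - 1 \<Longrightarrow>
  ([(g (i + 1), False), (s i, False)], [(s i, False), (g i, False)]) \<in> rels n"
  unfolding rels_def by (rule UnI1, rule UnI1, rule UnI2, rule CollectI, rule exI[of _ i]) simp
lemma rels_I4: "1 \<le> i \<and> i \<le> n - 1 \<Longrightarrow>
  ([(g i, False), (s i, False)], [(s i, False), (g i, False), (g (i + 1), False), (g i, True)]) \<in> rels n"
  unfolding rels_def by (rule UnI1, rule UnI2, rule CollectI, rule exI[of _ i]) simp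
lemma rels_I5: "1 \<le> i \<and> i \<le> n - 1 \<and> 1 \<le> j \<and> j \<le> n \<and> j \<noteq> i \<and> j \<noteq> i + 1 \<Longrightarrow>
  ([(g j, False), (s i, False)], [(s i, False), (g j, False)]) \<in> rels n"
  unfolding rels_def by (rule UnI2, rule CollectI, rule exI[of _ i], rule exI[of _ j]) simp

context
  fixes n :: nat
begin

interpretation G: group "FB n" by (rule FB_group)

lemma Sg_carrier[simp]: "1 \<le> i \<Longrightarrow> i \<le> n - 1 \<Longrightarrow> Sg n i \<in> carrier (FB n)"
  by (rule elem_carrier) simp
lemma Gg_carrier[simp]: "1 \<le> i \<Longrightarrow> i \<le> n \<Longrightarrow> Gg n i \<in> carrier (FB n)"
  by (rule elem_carrier) simp

lemma rel_far: assumes "1 \<le> i" "i \<le> n - 1" "1 \<le> j" "j \<le> n - 1" "i + 1 < j \<or> j + 1 < i"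
  shows "Sg n i \<otimes>\<^bsub>FB n\<^esub> Sg n j = Sg n j \<otimes>\<^bsub>FB n\<^esub> Sg n i"
proof -
  have "([(s i, False), (s j, False)], [(s j, False), (s i, False)]) \<in> rels n"
    using assms by (intro rels_I1) simp
  then show ?thesis unfolding elem_def using assms
    by (simp add: FB_mult_cls rel_cls)
qed

lemma rel_braid: assumes "1 \<le> i" "i + 1 \<le> n - 1"
  shows "Sg n i \<otimes>\<^bsub>FB n\<^esub> Sg n (i+1) \<otimes>\<^bsub>FB n\<^esub> Sg n i = Sg n (i+1) \<otimes>\<^bsub>FB n\<^esub> Sg n i \<otimes>\<^bsub>FB n\<^esub> Sg n (i+1)"
proof -
  have "([(s i, False), (s (i+1), False), (s i, False)], [(s (i+1), False), (s i, False), (s (i+1), False)]) \<in> rels n"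
    using assms by (intro rels_I2) simp
  then show ?thesis unfolding elem_def using assms
    by (simp add: FB_mult_cls rel_cls)
qed

lemma rel3: assumes "1 \<le> i" "i \<le> n - 1"
  shows "Gg n (i+1) \<otimes>\<^bsub>FB n\<^esub> Sg n i = Sg n i \<otimes>\<^bsub>FB n\<^esub> Gg n i"
proof -
  have "([(g (i+1), False), (s i, False)], [(s i, False), (g i, False)]) \<in> rels n"
    using assms by (intro rels_I3) simp
  then show ?thesis unfolding elem_def using assms
    by (simp add: FB_mult_cls rel_cls)
qed

lemma rel4: assumes "1 \<le> i" "i \<le> n - 1"
  shows "Gg n i \<otimes>\<^bsub>FB n\<^esub> Sg n i = Sg n i \<otimes>\<^bsub>FB n\<^esub> Gg n i \<otimes>\<^bsub>FB n\<^esub> Gg n (i+1) \<otimes>\<^bsub>FB n\<^esub> inv\<^bsub>FB n\<^esub> Gg n i"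
proof -
  have "([(g i, False), (s i, False)], [(s i, False), (g i, False), (g (i+1), False), (g i, True)]) \<in> rels n"
    using assms by (intro rels_I4) simp
  moreover have "inv\<^bsub>FB n\<^esub> Gg n i = cls (gens n) (rels n) [(g i, True)]" using assms by (intro inv_elem) simp
  moreover have "i \<le> n" "i + 1 \<le> n" using assms by auto
  ultimately show ?thesis 
    unfolding elem_def using assms
    by (simp add: FB_mult_cls rel_cls)
qed

lemma rel5: assumes "1 \<le> i" "i \<le> n - 1" "1 \<le> j" "j \<le> n" "j \<noteq> i" "j \<noteq> i + 1"
  shows "Gg n j \<otimes>\<^bsub>FB n\<^esub> Sg n i = Sg n i \<otimes>\<^bsub>FB n\<^esub> Gg n j"
proof -
  have "([(g j, False), (s i, False)], [(s i, False), (g j, False)]) \<in> rels n"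
    using assms by (intro rels_I5) simp
  then show ?thesis unfolding elem_def using assms
    by (simp add: FB_mult_cls rel_cls)
qed

end


lemma gr_mult_diff_left: "fs x \<Longrightarrow> fs y \<Longrightarrow> fs z \<Longrightarrow> gr_mult n (x - y) z = gr_mult n x z - gr_mult n y z"
proof -
  assume f: "fs x" "fs y" "fs z"
  have "gr_mult n (x - y + y) z = gr_mult n (x - y) z + gr_mult n y z"
    using f by (intro gr_mult_add_left fs_diff)
  then show ?thesis by (simp add: eq_diff_eq)
qed

lemma gr_mult_diff_right: "fs x \<Longrightarrow> fs y \<Longrightarrow> fs z \<Longrightarrow> gr_mult n z (x - y) = gr_mult n z x - gr_mult n z y"
proof -
  assume f: "fs x" "fs y" "fs z"
  have "gr_mult n z (x - y + y) = gr_mult n z (x - y) + gr_mult n z y"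
    using f by (intro gr_mult_add_right fs_diff)
  then show ?thesis by (simp add: eq_diff_eq)
qed

lemma fs_of[simp]: "fs (gr_of a)" by simp

lemmas gr_simps = gr_mult_diff_left gr_mult_diff_right gr_mult_add_left gr_mult_add_right
  gr_mult_of fs_diff fs_add fs_mult

definition offw :: "nat \<Rightarrow> nat set \<Rightarrow> grelt \<Rightarrow> grmat \<Rightarrow> bool" where
  "offw n W c A \<longleftrightarrow> (\<forall>k l. (k \<notin> W \<or> l \<notin> W) \<longrightarrow> A k l = (if k = l \<and> k < n then c else 0))"

lemma offwD: "offw n W c A \<Longrightarrow> k \<notin> W \<or> l \<notin> W \<Longrightarrow> A k l = (if k = l \<and> k < n then c else 0)"
  by (simp add: offw_def)

lemma offw_mono: "offw n W c A \<Longrightarrow> W \<subseteq> W' \<Longrightarrow> offw n W' c A"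
  unfolding offw_def by blast

lemma win_mult_in:
  assumes W: "W \<subseteq> {..<n}" and A: "offw n W a A" and k: "k \<in> W"
  shows "gm_mult n A B k l = (\<Sum>m\<in>W. gr_mult n (A k m) (B m l))"
  unfolding gm_mult_apply
proof (rule sum.mono_neutral_right)
  show "finite {..<n}" by simp
  show "W \<subseteq> {..<n}" by (rule W)
  show "\<forall>i\<in>{..<n} - W. gr_mult n (A k i) (B i l) = 0"
  proof
    fix m assume "m \<in> {..<n} - W"
    then have "A k m = 0" using offwD[OF A, of k m] k by auto
    then show "gr_mult n (A k m) (B m l) = 0" by simp
  qed
qed

lemma win_mult_off:
  assumes W: "W \<subseteq> {..<n}" and A: "offw n W a A" and B: "offw n W b B"
  shows "offw n W (gr_mult n a b) (gm_mult n A B)"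
  unfolding offw_def
proof (intro allI impI)
  fix k l assume kl: "k \<notin> W \<or> l \<notin> W"
  show "gm_mult n A B k l = (if k = l \<and> k < n then gr_mult n a b else 0)"
  proof (cases "k \<notin> W")
    case True
    have "gm_mult n A B k l = (\<Sum>m<n. if m = k then (if k < n then gr_mult n a (B k l) else 0) else 0)"
      unfolding gm_mult_apply by (intro sum.cong HOL.refl) (auto simp: offwD[OF A] True)
    also have "\<dots> = (if k < n then gr_mult n a (B k l) else 0)" by simp
    also have "\<dots> = (if k = l \<and> k < n then gr_mult n a b else 0)"
      using offwD[OF B, of k l] True by auto
    finally show ?thesis .
  next
    case False
    then have l: "l \<notin> W" using kl by blast
    have "gm_mult n A B k l = (\<Sum>m<n. if m = l then (if l < n then gr_mult n (A k l) b else 0) else 0)"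
      unfolding gm_mult_apply by (intro sum.cong HOL.refl) (auto simp: offwD[OF B] l)
    also have "\<dots> = (if l < n then gr_mult n (A k l) b else 0)" by simp
    also have "\<dots> = (if k = l \<and> k < n then gr_mult n a b else 0)"
      using offwD[OF A, of k l] l by auto
    finally show ?thesis .
  qed
qed

lemma win_eq:
  assumes "offw n W a A" "offw n W a B" "\<And>k l. k \<in> W \<Longrightarrow> l \<in> W \<Longrightarrow> A k l = B k l"
  shows "A = B"
proof (rule ext, rule ext)
  fix k l show "A k l = B k l"
    using assms offwD[OF assms(1), of k l] offwD[OF assms(2), of k l] by (cases "k \<in> W \<and> l \<in> W") auto
qed

lemma gm_one_offw: "offw n W (gr_one n) (gm_one n)"
  by (auto simp: offw_def gm_one_def gr_zero_eq)


definition Pinv :: "nat \<Rightarrow> nat \<Rightarrow> grmat" where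
  "Pinv n i = (\<lambda>k l. if n \<le> k \<or> n \<le> l then 0
     else if k = i - 1 \<and> l = i - 1 then gr_of (inv\<^bsub>FB n\<^esub> Sg n i) - gr_of (inv\<^bsub>FB n\<^esub> Gg n i \<otimes>\<^bsub>FB n\<^esub> inv\<^bsub>FB n\<^esub> Sg n i)
     else if k = i - 1 \<and> l = i then gr_of (inv\<^bsub>FB n\<^esub> Sg n i)
     else if k = i \<and> l = i - 1 then gr_of (inv\<^bsub>FB n\<^esub> Gg n i \<otimes>\<^bsub>FB n\<^esub> inv\<^bsub>FB n\<^esub> Sg n i)
     else if k = i \<and> l = i then 0
     else if k = l then gr_of (inv\<^bsub>FB n\<^esub> Sg n i) else 0)"

context
  fixes n j :: nat
  assumes j: "j + 2 \<le> n"
begin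

interpretation G: group "FB n" by (rule FB_group)

lemma S_car[simp]: "Sg n (Suc j) \<in> carrier (FB n)" using j by (intro Sg_carrier) auto
lemma G_car[simp]: "Gg n (Suc j) \<in> carrier (FB n)" using j by (intro Gg_carrier) auto
lemma G2_car[simp]: "Gg n (Suc (Suc j)) \<in> carrier (FB n)" using j by (intro Gg_carrier) auto

lemma cancel_simps:
  "x \<in> carrier (FB n) \<Longrightarrow> y \<in> carrier (FB n) \<Longrightarrow> inv\<^bsub>FB n\<^esub> x \<otimes>\<^bsub>FB n\<^esub> (x \<otimes>\<^bsub>FB n\<^esub> y) = y"
  "x \<in> carrier (FB n) \<Longrightarrow> y \<in> carrier (FB n) \<Longrightarrow> x \<otimes>\<^bsub>FB n\<^esub> (inv\<^bsub>FB n\<^esub> x \<otimes>\<^bsub>FB n\<^esub> y) = y"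
  by (simp_all add: G.m_assoc[symmetric])

lemmas grp = G.m_assoc G.r_inv G.l_inv G.inv_closed G.m_closed G.l_one G.r_one cancel_simps

lemma phi_gen_eq: "phi_gen n (Suc j) k l = (if n \<le> k \<or> n \<le> l then 0
     else if k = j \<and> l = j then 0
     else if k = j \<and> l = Suc j then gr_of (Sg n (Suc j) \<otimes>\<^bsub>FB n\<^esub> Gg n (Suc j))
     else if k = Suc j \<and> l = j then gr_of (Sg n (Suc j))
     else if k = Suc j \<and> l = Suc j then gr_of (Sg n (Suc j)) - gr_of (Sg n (Suc j) \<otimes>\<^bsub>FB n\<^esub> Gg n (Suc j))
     else if k = l then gr_of (Sg n (Suc j)) else 0)"
  unfolding phi_gen_def diagR_def
  by (auto simp: gr_simps gr_one_eq gr_zero_eq gr_diff_eq)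

lemma Pinv_eq: "Pinv n (Suc j) k l = (if n \<le> k \<or> n \<le> l then 0
     else if k = j \<and> l = j then gr_of (inv\<^bsub>FB n\<^esub> Sg n (Suc j)) - gr_of (inv\<^bsub>FB n\<^esub> Gg n (Suc j) \<otimes>\<^bsub>FB n\<^esub> inv\<^bsub>FB n\<^esub> Sg n (Suc j))
     else if k = j \<and> l = Suc j then gr_of (inv\<^bsub>FB n\<^esub> Sg n (Suc j))
     else if k = Suc j \<and> l = j then gr_of (inv\<^bsub>FB n\<^esub> Gg n (Suc j) \<otimes>\<^bsub>FB n\<^esub> inv\<^bsub>FB n\<^esub> Sg n (Suc j))
     else if k = Suc j \<and> l = Suc j then 0
     else if k = l then gr_of (inv\<^bsub>FB n\<^esub> Sg n (Suc j)) else 0)"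
  unfolding Pinv_def by simp

lemma W_sub: "{j, Suc j} \<subseteq> {..<n}" using j by auto

lemma phi_gen_offw: "offw n {j, Suc j} (gr_of (Sg n (Suc j))) (phi_gen n (Suc j))"
  unfolding offw_def phi_gen_eq by auto

lemma Pinv_offw: "offw n {j, Suc j} (gr_of (inv\<^bsub>FB n\<^esub> Sg n (Suc j))) (Pinv n (Suc j))"
  unfolding offw_def Pinv_eq by auto

lemma P_Pinv: "gm_mult n (phi_gen n (Suc j)) (Pinv n (Suc j)) = gm_one n"
proof (rule win_eq[OF _ gm_one_offw])
  show "offw n {j, Suc j} (gr_one n) (gm_mult n (phi_gen n (Suc j)) (Pinv n (Suc j)))"
    using win_mult_off[OF W_sub phi_gen_offw Pinv_offw] by (simp add: gr_mult_of gr_one_eq)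
next
  fix k l assume k: "k \<in> {j, Suc j}" and l: "l \<in> {j, Suc j}"
  have kn: "k < n" "l < n" "Suc j < n" using k l j by auto
  show "gm_mult n (phi_gen n (Suc j)) (Pinv n (Suc j)) k l = gm_one n k l"
    unfolding win_mult_in[OF W_sub phi_gen_offw k]
    using k l kn by (auto simp: phi_gen_eq Pinv_eq gr_simps grp gm_one_def gr_one_eq gr_zero_eq)
qed

lemma Pinv_P: "gm_mult n (Pinv n (Suc j)) (phi_gen n (Suc j)) = gm_one n"
proof (rule win_eq[OF _ gm_one_offw])
  show "offw n {j, Suc j} (gr_one n) (gm_mult n (Pinv n (Suc j)) (phi_gen n (Suc j)))"
    using win_mult_off[OF W_sub Pinv_offw phi_gen_offw] by (simp add: gr_mult_of gr_one_eq)
next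
  fix k l assume k: "k \<in> {j, Suc j}" and l: "l \<in> {j, Suc j}"
  have kn: "k < n" "l < n" "Suc j < n" using k l j by auto
  show "gm_mult n (Pinv n (Suc j)) (phi_gen n (Suc j)) k l = gm_one n k l"
    unfolding win_mult_in[OF W_sub Pinv_offw k]
    using k l kn by (auto simp: phi_gen_eq Pinv_eq gr_simps grp gm_one_def gr_one_eq gr_zero_eq)
qed

end


lemma tailI: "group G \<Longrightarrow> a \<in> carrier G \<Longrightarrow> b \<in> carrier G \<Longrightarrow> t \<in> carrier G \<Longrightarrow> a \<otimes>\<^bsub>G\<^esub> b = w \<Longrightarrow>
  a \<otimes>\<^bsub>G\<^esub> (b \<otimes>\<^bsub>G\<^esub> t) = w \<otimes>\<^bsub>G\<^esub> t"
  by (metis group.is_monoid monoid.m_assoc)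

context
  fixes n j :: nat
  assumes j: "j + 3 \<le> n"
begin

interpretation G: group "FB n" by (rule FB_group)

abbreviation "S1 \<equiv> Sg n (Suc j)"
abbreviation "S2 \<equiv> Sg n (Suc (Suc j))"
abbreviation "G1 \<equiv> Gg n (Suc j)"
abbreviation "G2 \<equiv> Gg n (Suc (Suc j))"
abbreviation "G3 \<equiv> Gg n (Suc (Suc (Suc j)))"

lemma car3[simp]: "S1 \<in> carrier (FB n)" "S2 \<in> carrier (FB n)" "G1 \<in> carrier (FB n)"
  "G2 \<in> carrier (FB n)" "G3 \<in> carrier (FB n)"
  using j by (auto intro!: Sg_carrier Gg_carrier)

lemma r_21: "G2 \<otimes>\<^bsub>FB n\<^esub> S1 = S1 \<otimes>\<^bsub>FB n\<^esub> G1" using rel3[of "Suc j" n] j by simp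
lemma r_11: "G1 \<otimes>\<^bsub>FB n\<^esub> S1 = S1 \<otimes>\<^bsub>FB n\<^esub> (G1 \<otimes>\<^bsub>FB n\<^esub> (G2 \<otimes>\<^bsub>FB n\<^esub> inv\<^bsub>FB n\<^esub> G1))"
  using rel4[of "Suc j" n] j by (simp add: G.m_assoc)
lemma r_32: "G3 \<otimes>\<^bsub>FB n\<^esub> S2 = S2 \<otimes>\<^bsub>FB n\<^esub> G2" using rel3[of "Suc (Suc j)" n] j by simp
lemma r_22: "G2 \<otimes>\<^bsub>FB n\<^esub> S2 = S2 \<otimes>\<^bsub>FB n\<^esub> (G2 \<otimes>\<^bsub>FB n\<^esub> (G3 \<otimes>\<^bsub>FB n\<^esub> inv\<^bsub>FB n\<^esub> G2))"
  using rel4[of "Suc (Suc j)" n] j by (simp add: G.m_assoc)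
lemma r_12: "G1 \<otimes>\<^bsub>FB n\<^esub> S2 = S2 \<otimes>\<^bsub>FB n\<^esub> G1" using rel5[of "Suc (Suc j)" n "Suc j"] j by simp
lemma r_31: "G3 \<otimes>\<^bsub>FB n\<^esub> S1 = S1 \<otimes>\<^bsub>FB n\<^esub> G3" using rel5[of "Suc j" n "Suc (Suc (Suc j))"] j by simp
lemma r_br: "S2 \<otimes>\<^bsub>FB n\<^esub> (S1 \<otimes>\<^bsub>FB n\<^esub> S2) = S1 \<otimes>\<^bsub>FB n\<^esub> (S2 \<otimes>\<^bsub>FB n\<^esub> S1)"
  using rel_braid[of "Suc j" n] j by (simp add: G.m_assoc)

lemma inv_swap: "a \<in> carrier (FB n) \<Longrightarrow> x \<in> carrier (FB n) \<Longrightarrow> a \<otimes>\<^bsub>FB n\<^esub> x = x \<otimes>\<^bsub>FB n\<^esub> b \<Longrightarrow> b \<in> carrier (FB n) \<Longrightarrow>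
  inv\<^bsub>FB n\<^esub> a \<otimes>\<^bsub>FB n\<^esub> x = x \<otimes>\<^bsub>FB n\<^esub> inv\<^bsub>FB n\<^esub> b"
proof -
  assume a: "a \<in> carrier (FB n)" and x: "x \<in> carrier (FB n)" and e: "a \<otimes>\<^bsub>FB n\<^esub> x = x \<otimes>\<^bsub>FB n\<^esub> b"
    and b: "b \<in> carrier (FB n)"
  have "inv\<^bsub>FB n\<^esub> a \<otimes>\<^bsub>FB n\<^esub> x = inv\<^bsub>FB n\<^esub> a \<otimes>\<^bsub>FB n\<^esub> ((x \<otimes>\<^bsub>FB n\<^esub> b) \<otimes>\<^bsub>FB n\<^esub> inv\<^bsub>FB n\<^esub> b)"
    using a x b by (simp add: G.m_assoc)
  also have "\<dots> = inv\<^bsub>FB n\<^esub> a \<otimes>\<^bsub>FB n\<^esub> ((a \<otimes>\<^bsub>FB n\<^esub> x) \<otimes>\<^bsub>FB n\<^esub> inv\<^bsub>FB n\<^esub> b)"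
    by (simp only: e)
  also have "\<dots> = x \<otimes>\<^bsub>FB n\<^esub> inv\<^bsub>FB n\<^esub> b"
    using a x b by (simp add: G.m_assoc[symmetric])
  finally show ?thesis .
qed

lemma r_i21: "inv\<^bsub>FB n\<^esub> G2 \<otimes>\<^bsub>FB n\<^esub> S1 = S1 \<otimes>\<^bsub>FB n\<^esub> inv\<^bsub>FB n\<^esub> G1" by (rule inv_swap) (simp_all add: r_21)
lemma r_i32: "inv\<^bsub>FB n\<^esub> G3 \<otimes>\<^bsub>FB n\<^esub> S2 = S2 \<otimes>\<^bsub>FB n\<^esub> inv\<^bsub>FB n\<^esub> G2" by (rule inv_swap) (simp_all add: r_32)
lemma r_i12: "inv\<^bsub>FB n\<^esub> G1 \<otimes>\<^bsub>FB n\<^esub> S2 = S2 \<otimes>\<^bsub>FB n\<^esub> inv\<^bsub>FB n\<^esub> G1" by (rule inv_swap) (simp_all add: r_12)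
lemma r_i31: "inv\<^bsub>FB n\<^esub> G3 \<otimes>\<^bsub>FB n\<^esub> S1 = S1 \<otimes>\<^bsub>FB n\<^esub> inv\<^bsub>FB n\<^esub> G3" by (rule inv_swap) (simp_all add: r_31)
lemma r_i11: "inv\<^bsub>FB n\<^esub> G1 \<otimes>\<^bsub>FB n\<^esub> S1 = S1 \<otimes>\<^bsub>FB n\<^esub> (G1 \<otimes>\<^bsub>FB n\<^esub> (inv\<^bsub>FB n\<^esub> G2 \<otimes>\<^bsub>FB n\<^esub> inv\<^bsub>FB n\<^esub> G1))"
proof -
  have "inv\<^bsub>FB n\<^esub> G1 \<otimes>\<^bsub>FB n\<^esub> S1 = S1 \<otimes>\<^bsub>FB n\<^esub> inv\<^bsub>FB n\<^esub> (G1 \<otimes>\<^bsub>FB n\<^esub> (G2 \<otimes>\<^bsub>FB n\<^esub> inv\<^bsub>FB n\<^esub> G1))"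
    by (rule inv_swap) (simp_all add: r_11)
  then show ?thesis by (simp add: G.inv_mult_group G.m_assoc)
qed
lemma r_i22: "inv\<^bsub>FB n\<^esub> G2 \<otimes>\<^bsub>FB n\<^esub> S2 = S2 \<otimes>\<^bsub>FB n\<^esub> (G2 \<otimes>\<^bsub>FB n\<^esub> (inv\<^bsub>FB n\<^esub> G3 \<otimes>\<^bsub>FB n\<^esub> inv\<^bsub>FB n\<^esub> G2))"
proof -
  have "inv\<^bsub>FB n\<^esub> G2 \<otimes>\<^bsub>FB n\<^esub> S2 = S2 \<otimes>\<^bsub>FB n\<^esub> inv\<^bsub>FB n\<^esub> (G2 \<otimes>\<^bsub>FB n\<^esub> (G3 \<otimes>\<^bsub>FB n\<^esub> inv\<^bsub>FB n\<^esub> G2))"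
    by (rule inv_swap) (simp_all add: r_22)
  then show ?thesis by (simp add: G.inv_mult_group G.m_assoc)
qed

lemma cancel_simps3:
  "x \<in> carrier (FB n) \<Longrightarrow> y \<in> carrier (FB n) \<Longrightarrow> inv\<^bsub>FB n\<^esub> x \<otimes>\<^bsub>FB n\<^esub> (x \<otimes>\<^bsub>FB n\<^esub> y) = y"
  "x \<in> carrier (FB n) \<Longrightarrow> y \<in> carrier (FB n) \<Longrightarrow> x \<otimes>\<^bsub>FB n\<^esub> (inv\<^bsub>FB n\<^esub> x \<otimes>\<^bsub>FB n\<^esub> y) = y"
  by (simp_all add: G.m_assoc[symmetric])

lemmas grp3 = G.m_assoc G.r_inv G.l_inv G.inv_closed G.m_closed G.l_one G.r_one cancel_simps3

lemmas rbase = r_21 r_11 r_32 r_22 r_12 r_31 r_i21 r_i32 r_i12 r_i31 r_i11 r_i22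

lemma tail_of: "a \<otimes>\<^bsub>FB n\<^esub> b = w \<Longrightarrow> a \<in> carrier (FB n) \<Longrightarrow> b \<in> carrier (FB n) \<Longrightarrow> t \<in> carrier (FB n) \<Longrightarrow>
   a \<otimes>\<^bsub>FB n\<^esub> (b \<otimes>\<^bsub>FB n\<^esub> t) = w \<otimes>\<^bsub>FB n\<^esub> t"
  by (rule tailI[OF FB_group])

lemmas rtails = tail_of[OF r_21] tail_of[OF r_11] tail_of[OF r_32] tail_of[OF r_22] tail_of[OF r_12]
  tail_of[OF r_31] tail_of[OF r_i21] tail_of[OF r_i32] tail_of[OF r_i12] tail_of[OF r_i31]
  tail_of[OF r_i11] tail_of[OF r_i22]

lemma r_brt: "t \<in> carrier (FB n) \<Longrightarrow> S2 \<otimes>\<^bsub>FB n\<^esub> (S1 \<otimes>\<^bsub>FB n\<^esub> (S2 \<otimes>\<^bsub>FB n\<^esub> t)) = S1 \<otimes>\<^bsub>FB n\<^esub> (S2 \<otimes>\<^bsub>FB n\<^esub> (S1 \<otimes>\<^bsub>FB n\<^esub> t))"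
  using r_br by (simp add: G.m_assoc[symmetric])

lemma W3: "{j, Suc j, Suc (Suc j)} \<subseteq> {..<n}" using j by auto

lemma P_offw3: "offw n {j, Suc j, Suc (Suc j)} (gr_of S1) (phi_gen n (Suc j))"
  by (rule offw_mono[OF phi_gen_offw]) (use j in auto)
lemma Q_offw3: "offw n {j, Suc j, Suc (Suc j)} (gr_of S2) (phi_gen n (Suc (Suc j)))"
  by (rule offw_mono[OF phi_gen_offw[of "Suc j" n]]) (use j in auto)

lemma braid_PQP: "gm_mult n (gm_mult n (phi_gen n (Suc j)) (phi_gen n (Suc (Suc j)))) (phi_gen n (Suc j))
  = gm_mult n (gm_mult n (phi_gen n (Suc (Suc j))) (phi_gen n (Suc j))) (phi_gen n (Suc (Suc j)))"
proof (rule win_eq)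
  show "offw n {j, Suc j, Suc (Suc j)} (gr_of (S1 \<otimes>\<^bsub>FB n\<^esub> (S2 \<otimes>\<^bsub>FB n\<^esub> S1)))
     (gm_mult n (gm_mult n (phi_gen n (Suc j)) (phi_gen n (Suc (Suc j)))) (phi_gen n (Suc j)))"
    using win_mult_off[OF W3 win_mult_off[OF W3 P_offw3 Q_offw3] P_offw3]
    by (simp add: gr_mult_of G.m_assoc)
  show "offw n {j, Suc j, Suc (Suc j)} (gr_of (S1 \<otimes>\<^bsub>FB n\<^esub> (S2 \<otimes>\<^bsub>FB n\<^esub> S1)))
     (gm_mult n (gm_mult n (phi_gen n (Suc (Suc j))) (phi_gen n (Suc j))) (phi_gen n (Suc (Suc j))))"
    using win_mult_off[OF W3 win_mult_off[OF W3 Q_offw3 P_offw3] Q_offw3]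
    by (simp add: gr_mult_of G.m_assoc r_br)
next
  fix k l assume k: "k \<in> {j, Suc j, Suc (Suc j)}" and l: "l \<in> {j, Suc j, Suc (Suc j)}"
  have kn: "k < n" "l < n" "Suc (Suc j) < n" using k l j by auto
  have j2: "Suc j + 2 \<le> n" "j + 2 \<le> n" using j by auto
  show "gm_mult n (gm_mult n (phi_gen n (Suc j)) (phi_gen n (Suc (Suc j)))) (phi_gen n (Suc j)) k l =
        gm_mult n (gm_mult n (phi_gen n (Suc (Suc j))) (phi_gen n (Suc j))) (phi_gen n (Suc (Suc j))) k l"
    unfolding win_mult_in[OF W3 win_mult_off[OF W3 P_offw3 Q_offw3] k]
      win_mult_in[OF W3 win_mult_off[OF W3 Q_offw3 P_offw3] k]
      win_mult_in[OF W3 P_offw3 k] win_mult_in[OF W3 Q_offw3 k]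
    using k l kn by (elim insertE emptyE) (simp_all add: phi_gen_eq[OF j2(1)] phi_gen_eq[OF j2(2)] gr_simps grp3 rbase rtails r_brt r_br)
qed

end

context
  fixes n a b :: nat
  assumes ab: "a + 2 \<le> b" and bn: "b + 2 \<le> n"
begin

interpretation G: group "FB n" by (rule FB_group)

abbreviation "Sa \<equiv> Sg n (Suc a)"
abbreviation "Sb \<equiv> Sg n (Suc b)"
abbreviation "Ga \<equiv> Gg n (Suc a)"
abbreviation "Gb \<equiv> Gg n (Suc b)"

lemma car4[simp]: "Sa \<in> carrier (FB n)" "Sb \<in> carrier (FB n)" "Ga \<in> carrier (FB n)" "Gb \<in> carrier (FB n)"
  using ab bn by (auto intro!: Sg_carrier Gg_carrier)

lemma f_ab: "Sb \<otimes>\<^bsub>FB n\<^esub> Sa = Sa \<otimes>\<^bsub>FB n\<^esub> Sb" using rel_far[of "Suc b" n "Suc a"] ab bn by simp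
lemma f_ga: "Ga \<otimes>\<^bsub>FB n\<^esub> Sb = Sb \<otimes>\<^bsub>FB n\<^esub> Ga" using rel5[of "Suc b" n "Suc a"] ab bn by simp
lemma f_gb: "Gb \<otimes>\<^bsub>FB n\<^esub> Sa = Sa \<otimes>\<^bsub>FB n\<^esub> Gb" using rel5[of "Suc a" n "Suc b"] ab bn by simp

lemma tail_of4: "x \<otimes>\<^bsub>FB n\<^esub> y = w \<Longrightarrow> x \<in> carrier (FB n) \<Longrightarrow> y \<in> carrier (FB n) \<Longrightarrow> t \<in> carrier (FB n) \<Longrightarrow>
   x \<otimes>\<^bsub>FB n\<^esub> (y \<otimes>\<^bsub>FB n\<^esub> t) = w \<otimes>\<^bsub>FB n\<^esub> t"
  by (rule tailI[OF FB_group])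

lemma cancel_simps4:
  "x \<in> carrier (FB n) \<Longrightarrow> y \<in> carrier (FB n) \<Longrightarrow> inv\<^bsub>FB n\<^esub> x \<otimes>\<^bsub>FB n\<^esub> (x \<otimes>\<^bsub>FB n\<^esub> y) = y"
  "x \<in> carrier (FB n) \<Longrightarrow> y \<in> carrier (FB n) \<Longrightarrow> x \<otimes>\<^bsub>FB n\<^esub> (inv\<^bsub>FB n\<^esub> x \<otimes>\<^bsub>FB n\<^esub> y) = y"
  by (simp_all add: G.m_assoc[symmetric])

lemmas grp4 = G.m_assoc G.r_inv G.l_inv G.inv_closed G.m_closed G.l_one G.r_one cancel_simps4
lemmas frules = f_ab f_ga f_gb tail_of4[OF f_ab] tail_of4[OF f_ga] tail_of4[OF f_gb]

lemma W4: "{a, Suc a, b, Suc b} \<subseteq> {..<n}" using ab bn by auto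

lemma Pa_offw4: "offw n {a, Suc a, b, Suc b} (gr_of Sa) (phi_gen n (Suc a))"
  by (rule offw_mono[OF phi_gen_offw[of a n]]) (use ab bn in auto)
lemma Pb_offw4: "offw n {a, Suc a, b, Suc b} (gr_of Sb) (phi_gen n (Suc b))"
  by (rule offw_mono[OF phi_gen_offw[of b n]]) (use ab bn in auto)

lemma far_PQ: "gm_mult n (phi_gen n (Suc a)) (phi_gen n (Suc b)) = gm_mult n (phi_gen n (Suc b)) (phi_gen n (Suc a))"
proof (rule win_eq)
  show "offw n {a, Suc a, b, Suc b} (gr_of (Sa \<otimes>\<^bsub>FB n\<^esub> Sb)) (gm_mult n (phi_gen n (Suc a)) (phi_gen n (Suc b)))"
    using win_mult_off[OF W4 Pa_offw4 Pb_offw4] by (simp add: gr_mult_of)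
  show "offw n {a, Suc a, b, Suc b} (gr_of (Sa \<otimes>\<^bsub>FB n\<^esub> Sb)) (gm_mult n (phi_gen n (Suc b)) (phi_gen n (Suc a)))"
    using win_mult_off[OF W4 Pb_offw4 Pa_offw4] by (simp add: gr_mult_of f_ab)
next
  fix k l assume k: "k \<in> {a, Suc a, b, Suc b}" and l: "l \<in> {a, Suc a, b, Suc b}"
  have kn: "k < n" "l < n" "Suc b < n" "Suc (Suc a) \<le> b" using k l ab bn by auto
  have j2: "a + 2 \<le> n" "b + 2 \<le> n" using ab bn by auto
  show "gm_mult n (phi_gen n (Suc a)) (phi_gen n (Suc b)) k l = gm_mult n (phi_gen n (Suc b)) (phi_gen n (Suc a)) k l"
    unfolding win_mult_in[OF W4 Pa_offw4 k] win_mult_in[OF W4 Pb_offw4 k]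
    using k l kn by (elim insertE emptyE) (simp_all add: phi_gen_eq[OF j2(1)] phi_gen_eq[OF j2(2)] gr_simps grp4 frules)
qed

end


lemma phi_gen_wf: assumes j: "j + 2 \<le> n" shows "gm_wf n (phi_gen n (Suc j))"
proof -
  interpret G: group "FB n" by (rule FB_group)
  have c: "Sg n (Suc j) \<in> carrier (FB n)" "Gg n (Suc j) \<in> carrier (FB n)" using j by (auto intro!: Sg_carrier Gg_carrier)
  show ?thesis
    by (rule gm_wfI) (use c in \<open>auto simp: phi_gen_eq[OF j] intro!: GR_of GR_diff\<close>)
qed

lemma Pinv_wf: assumes j: "j + 2 \<le> n" shows "gm_wf n (Pinv n (Suc j))"
proof -
  interpret G: group "FB n" by (rule FB_group)
  have c: "Sg n (Suc j) \<in> carrier (FB n)" "Gg n (Suc j) \<in> carrier (FB n)" using j by (auto intro!: Sg_carrier Gg_carrier)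
  show ?thesis
    by (rule gm_wfI) (use c in \<open>auto simp: Pinv_eq[OF j] intro!: GR_of GR_diff\<close>)
qed

lemma phi_gen_inv_eq: assumes j: "j + 2 \<le> n" shows "phi_gen_inv n (Suc j) = Pinv n (Suc j)"
  unfolding phi_gen_inv_def
proof (rule the_equality)
  show "gm_wf n (Pinv n (Suc j)) \<and> gm_mult n (phi_gen n (Suc j)) (Pinv n (Suc j)) = gm_one n \<and>
    gm_mult n (Pinv n (Suc j)) (phi_gen n (Suc j)) = gm_one n"
    using Pinv_wf[OF j] P_Pinv[OF j] Pinv_P[OF j] by simp
next
  fix M assume M: "gm_wf n M \<and> gm_mult n (phi_gen n (Suc j)) M = gm_one n \<and> gm_mult n M (phi_gen n (Suc j)) = gm_one n"
  have "M = gm_mult n (gm_mult n (Pinv n (Suc j)) (phi_gen n (Suc j))) M"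
    using M by (simp add: Pinv_P[OF j] gm_one_left)
  also have "\<dots> = gm_mult n (Pinv n (Suc j)) (gm_mult n (phi_gen n (Suc j)) M)"
    using M by (intro gm_mult_assoc Pinv_wf[OF j] phi_gen_wf[OF j]) simp
  also have "\<dots> = Pinv n (Suc j)" using M by (simp add: gm_one_right Pinv_wf[OF j])
  finally show "M = Pinv n (Suc j)" .
qed

lemma letter_cases: "x \<in> gens n \<Longrightarrow> (\<And>j. x = s (Suc j) \<Longrightarrow> j + 2 \<le> n \<Longrightarrow> P) \<Longrightarrow> (\<And>i. x = g i \<Longrightarrow> P) \<Longrightarrow> P"
proof -
  assume x: "x \<in> gens n" and hs: "\<And>j. x = s (Suc j) \<Longrightarrow> j + 2 \<le> n \<Longrightarrow> P" and hg: "\<And>i. x = g i \<Longrightarrow> P"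
  show P
  proof (cases x)
    case (g i) then show P by (rule hg)
  next
    case (s i)
    then have "1 \<le> i" "i \<le> n - 1" using x by auto
    then have "x = s (Suc (i - 1))" "(i - 1) + 2 \<le> n" using s by auto
    then show P by (rule hs)
  qed
qed

lemma phi_letter_wf: "fst a \<in> gens n \<Longrightarrow> gm_wf n (phi_letter n a)"
proof -
  assume "fst a \<in> gens n"
  then show ?thesis
  proof (rule letter_cases)
    fix j assume "fst a = s (Suc j)" "j + 2 \<le> n"
    then show ?thesis by (cases a; cases "snd a") (auto simp: phi_gen_inv_eq phi_gen_wf Pinv_wf)
  next
    fix i assume "fst a = g i"
    then show ?thesis by (cases a) (auto simp: gm_one_wf)
  qed
qed

lemma phi_word_wf: "w \<in> lists (gens n \<times> UNIV) \<Longrightarrow> gm_wf n (phi_word n w)"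
proof (induction w)
  case Nil then show ?case by (simp add: phi_word_def gm_one_wf)
next
  case (Cons a w)
  then show ?case unfolding phi_word_def
    by (simp add: gm_mult_wf phi_letter_wf[unfolded phi_word_def] Cons.IH[unfolded phi_word_def] mem_Times_iff)
qed

lemma phi_word_Cons: "phi_word n (a # w) = gm_mult n (phi_letter n a) (phi_word n w)"
  by (simp add: phi_word_def)

lemma phi_word_append: "u \<in> lists (gens n \<times> UNIV) \<Longrightarrow> v \<in> lists (gens n \<times> UNIV) \<Longrightarrow>
  phi_word n (u @ v) = gm_mult n (phi_word n u) (phi_word n v)"
proof (induction u)
  case Nil then show ?case by (simp add: phi_word_def gm_one_left phi_word_wf[unfolded phi_word_def])
next
  case (Cons a u)
  have a: "gm_wf n (phi_letter n a)" using Cons.prems by (intro phi_letter_wf) (auto simp: mem_Times_iff)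
  have "phi_word n ((a # u) @ v) = gm_mult n (phi_letter n a) (gm_mult n (phi_word n u) (phi_word n v))"
    using Cons by (simp add: phi_word_Cons)
  also have "\<dots> = gm_mult n (phi_word n (a # u)) (phi_word n v)"
    unfolding phi_word_Cons using Cons.prems a
    by (intro gm_mult_assoc[symmetric] phi_word_wf) auto
  finally show ?case .
qed


lemma phi_gen_wf': "1 \<le> i \<Longrightarrow> i \<le> n - 1 \<Longrightarrow> gm_wf n (phi_gen n i)"
  using phi_gen_wf[of "i - 1" n] by simp

lemma Pinv_wf': "1 \<le> i \<Longrightarrow> i \<le> n - 1 \<Longrightarrow> gm_wf n (Pinv n i)"
  using Pinv_wf[of "i - 1" n] by simp

lemma phi_gen_inv_eq': "1 \<le> i \<Longrightarrow> i \<le> n - 1 \<Longrightarrow> phi_gen_inv n i = Pinv n i"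
  using phi_gen_inv_eq[of "i - 1" n] by simp

lemma P_Pinv': "1 \<le> i \<Longrightarrow> i \<le> n - 1 \<Longrightarrow> gm_mult n (phi_gen n i) (Pinv n i) = gm_one n"
  using P_Pinv[of "i - 1" n] by simp
lemma Pinv_P': "1 \<le> i \<Longrightarrow> i \<le> n - 1 \<Longrightarrow> gm_mult n (Pinv n i) (phi_gen n i) = gm_one n"
  using Pinv_P[of "i - 1" n] by simp

lemma far': assumes "1 \<le> i" "i \<le> n - 1" "1 \<le> j" "j \<le> n - 1" "i + 1 < j"
  shows "gm_mult n (phi_gen n i) (phi_gen n j) = gm_mult n (phi_gen n j) (phi_gen n i)"
  using far_PQ[of "i - 1" "j - 1" n] assms by simp

lemma braid': assumes "1 \<le> i" "i + 1 \<le> n - 1"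
  shows "gm_mult n (phi_gen n i) (gm_mult n (phi_gen n (i+1)) (phi_gen n i))
       = gm_mult n (phi_gen n (i+1)) (gm_mult n (phi_gen n i) (phi_gen n (i+1)))"
proof -
  have w: "gm_wf n (phi_gen n i)" "gm_wf n (phi_gen n (i+1))" using assms by (auto intro!: phi_gen_wf')
  have "gm_mult n (gm_mult n (phi_gen n i) (phi_gen n (i+1))) (phi_gen n i)
       = gm_mult n (gm_mult n (phi_gen n (i+1)) (phi_gen n i)) (phi_gen n (i+1))"
    using braid_PQP[of "i - 1" n] assms by simp
  then show ?thesis using w by (simp add: gm_mult_assoc)
qed

lemma phi_word_two: "fst a \<in> gens n \<Longrightarrow> fst b \<in> gens n \<Longrightarrow> phi_word n [a, b] = gm_mult n (phi_letter n a) (phi_letter n b)"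
  by (simp add: phi_word_def gm_one_right phi_letter_wf)

lemma phi_word_rel: "(u, v) \<in> pres_rel (gens n) (rels n) \<Longrightarrow> phi_word n u = phi_word n v"
proof (induction rule: pres_rel.induct)
  case (refl w) then show ?case by simp
next
  case (sym u v) then show ?case by simp
next
  case (trans u v w) then show ?case by simp
next
  case (cancel a b)
  show ?case using cancel
  proof (rule letter_cases)
    fix j assume a: "a = s (Suc j)" and j: "j + 2 \<le> n"
    have i: "1 \<le> Suc j" "Suc j \<le> n - 1" using j by auto
    show ?thesis using a i
      by (cases b) (simp_all add: phi_word_def gm_one_right phi_gen_inv_eq' Pinv_wf' P_Pinv' Pinv_P' phi_gen_wf')
  next
    fix i assume "a = g i"
    then show ?thesis by (simp add: phi_word_def gm_one_right gm_one_wf)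
  qed
next
  case (rel u v)
  from rel.hyps(1) show ?case unfolding rels_def
  proof (elim UnE)
    assume "(u, v) \<in> {([(s i, False), (s j, False)], [(s j, False), (s i, False)]) | i j.
         1 \<le> i \<and> i \<le> n - 1 \<and> 1 \<le> j \<and> j \<le> n - 1 \<and> (i + 1 < j \<or> j + 1 < i)}"
    then obtain i j where uv: "u = [(s i, False), (s j, False)]" "v = [(s j, False), (s i, False)]"
      and c: "1 \<le> i" "i \<le> n - 1" "1 \<le> j" "j \<le> n - 1" "i + 1 < j \<or> j + 1 < i" by blast
    have w: "gm_wf n (phi_gen n i)" "gm_wf n (phi_gen n j)" using c by (auto intro!: phi_gen_wf')
    show ?thesis using c(5) unfolding uv
    proof
      assume "i + 1 < j" then show "phi_word n [(s i, False), (s j, False)] = phi_word n [(s j, False), (s i, False)]"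
        using far'[of i n j] c w by (simp add: phi_word_def gm_one_right)
    next
      assume "j + 1 < i" then show "phi_word n [(s i, False), (s j, False)] = phi_word n [(s j, False), (s i, False)]"
        using far'[of j n i] c w by (simp add: phi_word_def gm_one_right)
    qed
  next
    assume "(u, v) \<in> {([(s i, False), (s j, False), (s i, False)], [(s j, False), (s i, False), (s j, False)]) | i j.
         1 \<le> i \<and> i \<le> n - 1 \<and> 1 \<le> j \<and> j \<le> n - 1 \<and> (i = j + 1 \<or> j = i + 1)}"
    then obtain i j where uv: "u = [(s i, False), (s j, False), (s i, False)]" "v = [(s j, False), (s i, False), (s j, False)]"
      and c: "1 \<le> i" "i \<le> n - 1" "1 \<le> j" "j \<le> n - 1" "i = j + 1 \<or> j = i + 1" by blast
    have w: "gm_wf n (phi_gen n i)" "gm_wf n (phi_gen n j)" using c by (auto intro!: phi_gen_wf')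
    show ?thesis using c(5) unfolding uv
    proof
      assume "i = j + 1" then show "phi_word n [(s i, False), (s j, False), (s i, False)] = phi_word n [(s j, False), (s i, False), (s j, False)]"
        using braid'[of j n] c w by (simp add: phi_word_def gm_one_right)
    next
      assume "j = i + 1" then show "phi_word n [(s i, False), (s j, False), (s i, False)] = phi_word n [(s j, False), (s i, False), (s j, False)]"
        using braid'[of i n] c w by (simp add: phi_word_def gm_one_right)
    qed
  next
    assume "(u, v) \<in> {([(g (i + 1), False), (s i, False)], [(s i, False), (g i, False)]) | i. 1 \<le> i \<and> i \<le> n - 1}"
    then obtain i where uv: "u = [(g (i + 1), False), (s i, False)]" "v = [(s i, False), (g i, False)]"
      and c: "1 \<le> i" "i \<le> n - 1" by blast
    show ?thesis unfolding uv using phi_gen_wf'[OF c]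
      by (simp add: phi_word_def gm_one_right gm_one_left gm_one_wf)
  next
    assume "(u, v) \<in> {([(g i, False), (s i, False)], [(s i, False), (g i, False), (g (i + 1), False), (g i, True)]) | i.
       1 \<le> i \<and> i \<le> n - 1}"
    then obtain i where uv: "u = [(g i, False), (s i, False)]" "v = [(s i, False), (g i, False), (g (i + 1), False), (g i, True)]"
      and c: "1 \<le> i" "i \<le> n - 1" by blast
    show ?thesis unfolding uv using phi_gen_wf'[OF c]
      by (simp add: phi_word_def gm_one_right gm_one_left gm_one_wf)
  next
    assume "(u, v) \<in> {([(g j, False), (s i, False)], [(s i, False), (g j, False)]) | i j.
         1 \<le> i \<and> i \<le> n - 1 \<and> 1 \<le> j \<and> j \<le> n \<and> j \<noteq> i \<and> j \<noteq> i + 1}"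
    then obtain i j where uv: "u = [(g j, False), (s i, False)]" "v = [(s i, False), (g j, False)]"
      and c: "1 \<le> i" "i \<le> n - 1" by blast
    show ?thesis unfolding uv using phi_gen_wf'[OF c]
      by (simp add: phi_word_def gm_one_right gm_one_left gm_one_wf)
  qed
next
  case (cong u v u' v')
  have l: "u \<in> lists (gens n \<times> UNIV)" "v \<in> lists (gens n \<times> UNIV)" "u' \<in> lists (gens n \<times> UNIV)" "v' \<in> lists (gens n \<times> UNIV)"
    using pres_rel_lists[OF cong.hyps(1)] pres_rel_lists[OF cong.hyps(2)] by auto
  show ?case using cong.IH l by (simp add: phi_word_append)
qed


abbreviation SL :: "nat \<Rightarrow> gen set" where "SL n \<equiv> {s i | i. 1 \<le> i \<and> i \<le> n - 1}"

lemma SL_gens: "SL n \<subseteq> gens n" by auto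

lemma Sw_lists: "w \<in> lists (SL n \<times> UNIV) \<Longrightarrow> w \<in> lists (gens n \<times> UNIV)"
  by (induction w) auto

abbreviation clsn :: "nat \<Rightarrow> gen word \<Rightarrow> gen word set" where "clsn n w \<equiv> cls (gens n) (rels n) w"

lemma braid_sub_repr: "\<beta> \<in> braid_sub n \<Longrightarrow> \<exists>w. w \<in> lists (SL n \<times> UNIV) \<and> clsn n w = \<beta>"
  unfolding braid_sub_def
proof (induction rule: generate.induct)
  case one then show ?case by (intro exI[of _ "[]"]) (simp add: FB_one_cls)
next
  case (incl h)
  then obtain i where "h = elem n (s i)" "1 \<le> i" "i \<le> n - 1" by blast
  then show ?case by (intro exI[of _ "[(s i, False)]"]) (auto simp: elem_def)
next
  case (inv h)
  then obtain i where "h = elem n (s i)" "1 \<le> i" "i \<le> n - 1" by blast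
  then show ?case by (intro exI[of _ "[(s i, True)]"]) (auto simp: inv_elem)
next
  case (eng h1 h2)
  then obtain w1 w2 where "w1 \<in> lists (SL n \<times> UNIV)" "clsn n w1 = h1" "w2 \<in> lists (SL n \<times> UNIV)" "clsn n w2 = h2"
    by blast
  show ?case
  proof (intro exI conjI)
    show "w1 @ w2 \<in> lists (SL n \<times> UNIV)" using \<open>w1 \<in> _\<close> \<open>w2 \<in> _\<close> by simp
    show "clsn n (w1 @ w2) = h1 \<otimes>\<^bsub>FB n\<^esub> h2"
      using FB_mult_cls[OF Sw_lists Sw_lists, OF \<open>w1 \<in> _\<close> \<open>w2 \<in> _\<close>] \<open>clsn n w1 = h1\<close> \<open>clsn n w2 = h2\<close> by simp
  qed
qed

lemma phi_cls: assumes w: "w \<in> lists (SL n \<times> UNIV)" shows "phi n (clsn n w) = phi_word n w"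
proof -
  define w' where "w' = (SOME w'. w' \<in> lists (SL n \<times> UNIV) \<and> clsn n w' = clsn n w)"
  have "w' \<in> lists (SL n \<times> UNIV) \<and> clsn n w' = clsn n w"
    unfolding w'_def by (rule someI[of _ w]) (use w in simp)
  then have w': "w' \<in> lists (SL n \<times> UNIV)" "clsn n w' = clsn n w" by auto
  have "(w', w) \<in> pres_rel (gens n) (rels n)"
    using w' cls_eq_iff[OF Sw_lists[OF w'(1)] Sw_lists[OF w]] by simp
  then have "phi_word n w' = phi_word n w" by (rule phi_word_rel)
  then show ?thesis unfolding phi_def w'_def[symmetric] .
qed

lemma phi_wf: "\<beta> \<in> braid_sub n \<Longrightarrow> gm_wf n (phi n \<beta>)"
proof -
  assume "\<beta> \<in> braid_sub n"
  then obtain w where w: "w \<in> lists (SL n \<times> UNIV)" "clsn n w = \<beta>" using braid_sub_repr by blast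
  show ?thesis unfolding w(2)[symmetric] phi_cls[OF w(1)] by (rule phi_word_wf[OF Sw_lists[OF w(1)]])
qed

lemma phi_mult: assumes "\<beta>1 \<in> braid_sub n" "\<beta>2 \<in> braid_sub n"
  shows "phi n (\<beta>1 \<otimes>\<^bsub>FB n\<^esub> \<beta>2) = gm_mult n (phi n \<beta>1) (phi n \<beta>2)"
proof -
  obtain w1 w2 where w: "w1 \<in> lists (SL n \<times> UNIV)" "clsn n w1 = \<beta>1" "w2 \<in> lists (SL n \<times> UNIV)" "clsn n w2 = \<beta>2"
    using braid_sub_repr assms by blast
  have e: "\<beta>1 \<otimes>\<^bsub>FB n\<^esub> \<beta>2 = clsn n (w1 @ w2)" unfolding w(2,4)[symmetric]
    by (rule FB_mult_cls; rule Sw_lists; rule w)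
  have l: "w1 @ w2 \<in> lists (SL n \<times> UNIV)" using w(1,3) by (rule append_in_lists_conv[THEN iffD2, OF conjI])
  have "phi n (\<beta>1 \<otimes>\<^bsub>FB n\<^esub> \<beta>2) = phi_word n (w1 @ w2)" unfolding e by (rule phi_cls[OF l])
  also have "\<dots> = gm_mult n (phi_word n w1) (phi_word n w2)"
    by (rule phi_word_append; rule Sw_lists; rule w)
  also have "\<dots> = gm_mult n (phi n \<beta>1) (phi n \<beta>2)"
    using phi_cls[OF w(1)] phi_cls[OF w(3)] w(2,4) by simp
  finally show ?thesis .
qed

lemma phi_one: "phi n \<one>\<^bsub>FB n\<^esub> = gm_one n"
  using phi_cls[of "[]" n] by (simp add: FB_one_cls phi_word_def)

definition Fc :: "nat \<Rightarrow> gen word set \<Rightarrow> gen word set set" where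
  "Fc n y = {f \<otimes>\<^bsub>FB n\<^esub> y | f. f \<in> free_sub n}"

definition conjF :: "nat \<Rightarrow> gen word set \<Rightarrow> bool" where
  "conjF n x \<longleftrightarrow> (\<forall>f\<in>free_sub n. x \<otimes>\<^bsub>FB n\<^esub> f \<otimes>\<^bsub>FB n\<^esub> inv\<^bsub>FB n\<^esub> x \<in> free_sub n)"

context fixes n :: nat
begin

interpretation G: group "FB n" by (rule FB_group)

lemma cancelK:
  "x \<in> carrier (FB n) \<Longrightarrow> y \<in> carrier (FB n) \<Longrightarrow> inv\<^bsub>FB n\<^esub> x \<otimes>\<^bsub>FB n\<^esub> (x \<otimes>\<^bsub>FB n\<^esub> y) = y"
  "x \<in> carrier (FB n) \<Longrightarrow> y \<in> carrier (FB n) \<Longrightarrow> x \<otimes>\<^bsub>FB n\<^esub> (inv\<^bsub>FB n\<^esub> x \<otimes>\<^bsub>FB n\<^esub> y) = y"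
  by (simp_all add: G.m_assoc[symmetric])

lemma gensF_car: "{Gg n i | i. 1 \<le> i \<and> i \<le> n} \<subseteq> carrier (FB n)" by (auto intro: Gg_carrier)

lemma F_car: "f \<in> free_sub n \<Longrightarrow> f \<in> carrier (FB n)"
  unfolding free_sub_def using G.generate_in_carrier[OF gensF_car] by blast

lemma F_one: "\<one>\<^bsub>FB n\<^esub> \<in> free_sub n" unfolding free_sub_def by (rule generate.one)
lemma F_mult: "a \<in> free_sub n \<Longrightarrow> b \<in> free_sub n \<Longrightarrow> a \<otimes>\<^bsub>FB n\<^esub> b \<in> free_sub n"
  unfolding free_sub_def by (rule generate.eng)
lemma F_inv: "a \<in> free_sub n \<Longrightarrow> inv\<^bsub>FB n\<^esub> a \<in> free_sub n"
  unfolding free_sub_def by (rule G.generate_m_inv_closed[OF gensF_car])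
lemma F_gen: "1 \<le> i \<Longrightarrow> i \<le> n \<Longrightarrow> Gg n i \<in> free_sub n"
  unfolding free_sub_def by (rule generate.incl) blast

lemma conjF_gen:
  assumes x: "x \<in> carrier (FB n)" and gens: "\<And>i. 1 \<le> i \<Longrightarrow> i \<le> n \<Longrightarrow> x \<otimes>\<^bsub>FB n\<^esub> Gg n i \<otimes>\<^bsub>FB n\<^esub> inv\<^bsub>FB n\<^esub> x \<in> free_sub n"
  shows "conjF n x"
  unfolding conjF_def
proof
  fix f assume "f \<in> free_sub n"
  then show "x \<otimes>\<^bsub>FB n\<^esub> f \<otimes>\<^bsub>FB n\<^esub> inv\<^bsub>FB n\<^esub> x \<in> free_sub n"
    unfolding free_sub_def
  proof (induction rule: generate.induct)
    case one then show ?case using x F_one[unfolded free_sub_def] by simp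
  next
    case (incl h) then show ?case using gens[folded free_sub_def] by (auto simp: free_sub_def)
  next
    case (inv h)
    then obtain i where h: "h = Gg n i" "1 \<le> i" "i \<le> n" by blast
    have c: "h \<in> carrier (FB n)" using h by simp
    have "x \<otimes>\<^bsub>FB n\<^esub> inv\<^bsub>FB n\<^esub> h \<otimes>\<^bsub>FB n\<^esub> inv\<^bsub>FB n\<^esub> x = inv\<^bsub>FB n\<^esub> (x \<otimes>\<^bsub>FB n\<^esub> h \<otimes>\<^bsub>FB n\<^esub> inv\<^bsub>FB n\<^esub> x)"
      using x c by (simp add: G.inv_mult_group G.m_assoc)
    then show ?case using F_inv[OF gens[OF h(2,3)]] h(1) by (simp add: free_sub_def)
  next
    case (eng h1 h2)
    have c: "h1 \<in> carrier (FB n)" "h2 \<in> carrier (FB n)" using eng.hyps F_car by (auto simp: free_sub_def)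
    have "x \<otimes>\<^bsub>FB n\<^esub> (h1 \<otimes>\<^bsub>FB n\<^esub> h2) \<otimes>\<^bsub>FB n\<^esub> inv\<^bsub>FB n\<^esub> x =
      (x \<otimes>\<^bsub>FB n\<^esub> h1 \<otimes>\<^bsub>FB n\<^esub> inv\<^bsub>FB n\<^esub> x) \<otimes>\<^bsub>FB n\<^esub> (x \<otimes>\<^bsub>FB n\<^esub> h2 \<otimes>\<^bsub>FB n\<^esub> inv\<^bsub>FB n\<^esub> x)"
      using x c by (simp add: G.m_assoc cancelK)
    then show ?case using F_mult[unfolded free_sub_def, OF eng.IH] by simp
  qed
qed

end


context
  fixes n i :: nat
  assumes i: "1 \<le> i" "i \<le> n - 1"
begin

interpretation G: group "FB n" by (rule FB_group)

abbreviation "SS \<equiv> Sg n i"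
abbreviation "GA \<equiv> Gg n i"
abbreviation "GB \<equiv> Gg n (Suc i)"

lemma carL[simp]: "SS \<in> carrier (FB n)" "GA \<in> carrier (FB n)" "GB \<in> carrier (FB n)"
  using i by (auto intro!: Sg_carrier Gg_carrier)

lemma cancelL:
  "x \<in> carrier (FB n) \<Longrightarrow> y \<in> carrier (FB n) \<Longrightarrow> inv\<^bsub>FB n\<^esub> x \<otimes>\<^bsub>FB n\<^esub> (x \<otimes>\<^bsub>FB n\<^esub> y) = y"
  "x \<in> carrier (FB n) \<Longrightarrow> y \<in> carrier (FB n) \<Longrightarrow> x \<otimes>\<^bsub>FB n\<^esub> (inv\<^bsub>FB n\<^esub> x \<otimes>\<^bsub>FB n\<^esub> y) = y"
  by (simp_all add: G.m_assoc[symmetric])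

lemma l3: "GB \<otimes>\<^bsub>FB n\<^esub> SS = SS \<otimes>\<^bsub>FB n\<^esub> GA" using rel3[OF i] by simp
lemma l4: "GA \<otimes>\<^bsub>FB n\<^esub> SS = SS \<otimes>\<^bsub>FB n\<^esub> (GA \<otimes>\<^bsub>FB n\<^esub> (GB \<otimes>\<^bsub>FB n\<^esub> inv\<^bsub>FB n\<^esub> GA))"
  using rel4[OF i] by (simp add: G.m_assoc)

lemma key: "GB \<otimes>\<^bsub>FB n\<^esub> (SS \<otimes>\<^bsub>FB n\<^esub> GB) = GA \<otimes>\<^bsub>FB n\<^esub> (GB \<otimes>\<^bsub>FB n\<^esub> SS)"
proof -
  have "GB \<otimes>\<^bsub>FB n\<^esub> (SS \<otimes>\<^bsub>FB n\<^esub> GB) = (GB \<otimes>\<^bsub>FB n\<^esub> SS) \<otimes>\<^bsub>FB n\<^esub> GB" by (simp add: G.m_assoc)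
  also have "\<dots> = SS \<otimes>\<^bsub>FB n\<^esub> (GA \<otimes>\<^bsub>FB n\<^esub> GB)" by (simp add: l3 G.m_assoc)
  also have "\<dots> = (GA \<otimes>\<^bsub>FB n\<^esub> SS) \<otimes>\<^bsub>FB n\<^esub> GA" by (simp add: l4 G.m_assoc cancelL)
  also have "\<dots> = GA \<otimes>\<^bsub>FB n\<^esub> (GB \<otimes>\<^bsub>FB n\<^esub> SS)" by (simp add: l3 G.m_assoc)
  finally show ?thesis .
qed

lemma conj_S: "conjF n SS"
proof (rule conjF_gen)
  show "SS \<in> carrier (FB n)" by simp
  fix j assume j: "1 \<le> j" "j \<le> n"
  consider "j = i" | "j = i + 1" | "j \<noteq> i" "j \<noteq> i + 1" by blast
  then show "SS \<otimes>\<^bsub>FB n\<^esub> Gg n j \<otimes>\<^bsub>FB n\<^esub> inv\<^bsub>FB n\<^esub> SS \<in> free_sub n"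
  proof cases
    case 1
    have "SS \<otimes>\<^bsub>FB n\<^esub> GA \<otimes>\<^bsub>FB n\<^esub> inv\<^bsub>FB n\<^esub> SS = GB" by (simp add: l3[symmetric] G.m_assoc)
    then show ?thesis using 1 F_gen[of "i+1" n] i by simp
  next
    case 2
    have "SS \<otimes>\<^bsub>FB n\<^esub> GB \<otimes>\<^bsub>FB n\<^esub> inv\<^bsub>FB n\<^esub> SS = inv\<^bsub>FB n\<^esub> GB \<otimes>\<^bsub>FB n\<^esub> (GB \<otimes>\<^bsub>FB n\<^esub> (SS \<otimes>\<^bsub>FB n\<^esub> GB)) \<otimes>\<^bsub>FB n\<^esub> inv\<^bsub>FB n\<^esub> SS"
      by (simp add: G.m_assoc cancelL)
    also have "\<dots> = inv\<^bsub>FB n\<^esub> GB \<otimes>\<^bsub>FB n\<^esub> (GA \<otimes>\<^bsub>FB n\<^esub> (GB \<otimes>\<^bsub>FB n\<^esub> SS)) \<otimes>\<^bsub>FB n\<^esub> inv\<^bsub>FB n\<^esub> SS"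
      by (simp only: key)
    also have "\<dots> = inv\<^bsub>FB n\<^esub> GB \<otimes>\<^bsub>FB n\<^esub> (GA \<otimes>\<^bsub>FB n\<^esub> GB)" by (simp add: G.m_assoc)
    finally have e: "SS \<otimes>\<^bsub>FB n\<^esub> GB \<otimes>\<^bsub>FB n\<^esub> inv\<^bsub>FB n\<^esub> SS = inv\<^bsub>FB n\<^esub> GB \<otimes>\<^bsub>FB n\<^esub> (GA \<otimes>\<^bsub>FB n\<^esub> GB)" .
    have "inv\<^bsub>FB n\<^esub> GB \<otimes>\<^bsub>FB n\<^esub> (GA \<otimes>\<^bsub>FB n\<^esub> GB) \<in> free_sub n"
      using i by (intro F_mult F_inv F_gen) auto
    then show ?thesis using 2 e by simp
  next
    case 3
    have "Gg n j \<otimes>\<^bsub>FB n\<^esub> SS = SS \<otimes>\<^bsub>FB n\<^esub> Gg n j" using rel5[OF i j 3] .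
    then have "SS \<otimes>\<^bsub>FB n\<^esub> Gg n j \<otimes>\<^bsub>FB n\<^esub> inv\<^bsub>FB n\<^esub> SS = Gg n j \<otimes>\<^bsub>FB n\<^esub> SS \<otimes>\<^bsub>FB n\<^esub> inv\<^bsub>FB n\<^esub> SS"
      by simp
    also have "\<dots> = Gg n j" using j by (simp add: G.m_assoc Gg_carrier)
    finally have "SS \<otimes>\<^bsub>FB n\<^esub> Gg n j \<otimes>\<^bsub>FB n\<^esub> inv\<^bsub>FB n\<^esub> SS = Gg n j" .
    then show ?thesis using F_gen[OF j] by simp
  qed
qed

lemma conj_invS: "conjF n (inv\<^bsub>FB n\<^esub> SS)"
proof (rule conjF_gen)
  show "inv\<^bsub>FB n\<^esub> SS \<in> carrier (FB n)" by simp
  fix j assume j: "1 \<le> j" "j \<le> n"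
  consider "j = i" | "j = i + 1" | "j \<noteq> i" "j \<noteq> i + 1" by blast
  then show "inv\<^bsub>FB n\<^esub> SS \<otimes>\<^bsub>FB n\<^esub> Gg n j \<otimes>\<^bsub>FB n\<^esub> inv\<^bsub>FB n\<^esub> (inv\<^bsub>FB n\<^esub> SS) \<in> free_sub n"
  proof cases
    case 1
    have "inv\<^bsub>FB n\<^esub> SS \<otimes>\<^bsub>FB n\<^esub> GA \<otimes>\<^bsub>FB n\<^esub> inv\<^bsub>FB n\<^esub> (inv\<^bsub>FB n\<^esub> SS) = GA \<otimes>\<^bsub>FB n\<^esub> (GB \<otimes>\<^bsub>FB n\<^esub> inv\<^bsub>FB n\<^esub> GA)"
      by (simp add: G.m_assoc l4 cancelL)
    moreover have "GA \<otimes>\<^bsub>FB n\<^esub> (GB \<otimes>\<^bsub>FB n\<^esub> inv\<^bsub>FB n\<^esub> GA) \<in> free_sub n"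
      using i by (intro F_mult F_inv F_gen) auto
    ultimately show ?thesis using 1 by simp
  next
    case 2
    have "inv\<^bsub>FB n\<^esub> SS \<otimes>\<^bsub>FB n\<^esub> GB \<otimes>\<^bsub>FB n\<^esub> inv\<^bsub>FB n\<^esub> (inv\<^bsub>FB n\<^esub> SS) = GA"
      by (simp add: G.m_assoc l3 cancelL)
    then show ?thesis using 2 F_gen[of i n] i by simp
  next
    case 3
    have "Gg n j \<otimes>\<^bsub>FB n\<^esub> SS = SS \<otimes>\<^bsub>FB n\<^esub> Gg n j" using rel5[OF i j 3] .
    then have "inv\<^bsub>FB n\<^esub> SS \<otimes>\<^bsub>FB n\<^esub> Gg n j \<otimes>\<^bsub>FB n\<^esub> inv\<^bsub>FB n\<^esub> (inv\<^bsub>FB n\<^esub> SS) = Gg n j"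
      using j by (simp add: G.m_assoc cancelL Gg_carrier)
    then show ?thesis using F_gen[OF j] by simp
  qed
qed

end


context fixes n :: nat
begin

interpretation G: group "FB n" by (rule FB_group)

lemma cancelM:
  "x \<in> carrier (FB n) \<Longrightarrow> y \<in> carrier (FB n) \<Longrightarrow> inv\<^bsub>FB n\<^esub> x \<otimes>\<^bsub>FB n\<^esub> (x \<otimes>\<^bsub>FB n\<^esub> y) = y"
  "x \<in> carrier (FB n) \<Longrightarrow> y \<in> carrier (FB n) \<Longrightarrow> x \<otimes>\<^bsub>FB n\<^esub> (inv\<^bsub>FB n\<^esub> x \<otimes>\<^bsub>FB n\<^esub> y) = y"
  by (simp_all add: G.m_assoc[symmetric])

lemma Fc_car: "x \<in> Fc n a \<Longrightarrow> a \<in> carrier (FB n) \<Longrightarrow> x \<in> carrier (FB n)"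
  unfolding Fc_def using F_car by auto

lemma Fc_mult: assumes ca: "conjF n a" and a: "a \<in> carrier (FB n)" and b: "b \<in> carrier (FB n)"
  and x: "x \<in> Fc n a" and y: "y \<in> Fc n b"
  shows "x \<otimes>\<^bsub>FB n\<^esub> y \<in> Fc n (a \<otimes>\<^bsub>FB n\<^esub> b)"
proof -
  obtain f1 where f1: "f1 \<in> free_sub n" "x = f1 \<otimes>\<^bsub>FB n\<^esub> a" using x unfolding Fc_def by blast
  obtain f2 where f2: "f2 \<in> free_sub n" "y = f2 \<otimes>\<^bsub>FB n\<^esub> b" using y unfolding Fc_def by blast
  have c: "f1 \<in> carrier (FB n)" "f2 \<in> carrier (FB n)" using f1 f2 F_car by auto
  have "x \<otimes>\<^bsub>FB n\<^esub> y = (f1 \<otimes>\<^bsub>FB n\<^esub> (a \<otimes>\<^bsub>FB n\<^esub> f2 \<otimes>\<^bsub>FB n\<^esub> inv\<^bsub>FB n\<^esub> a)) \<otimes>\<^bsub>FB n\<^esub> (a \<otimes>\<^bsub>FB n\<^esub> b)"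
    using f1 f2 c a b by (simp add: G.m_assoc cancelM)
  moreover have "f1 \<otimes>\<^bsub>FB n\<^esub> (a \<otimes>\<^bsub>FB n\<^esub> f2 \<otimes>\<^bsub>FB n\<^esub> inv\<^bsub>FB n\<^esub> a) \<in> free_sub n"
    by (rule F_mult[OF f1(1)]) (use ca f2 in \<open>simp add: conjF_def\<close>)
  ultimately show ?thesis unfolding Fc_def by blast
qed

lemma Fc_left: "f \<in> free_sub n \<Longrightarrow> f \<otimes>\<^bsub>FB n\<^esub> a \<in> Fc n a" unfolding Fc_def by blast
lemma Fc_self: "a \<in> carrier (FB n) \<Longrightarrow> a \<in> Fc n a"
  using Fc_left[OF F_one, of a] by simp

lemma letter_supp: assumes a: "a \<in> SL n \<times> UNIV"
  shows "gr_supp (phi_letter n a k l) \<subseteq> Fc n (clsn n [a])"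
proof -
  obtain i b where ab: "a = (s i, b)" "1 \<le> i" "i \<le> n - 1" using a by blast
  define j where "j = i - 1"
  have ij: "i = Suc j" "j + 2 \<le> n" using ab unfolding j_def by auto
  have c: "Sg n i \<in> carrier (FB n)" "Gg n i \<in> carrier (FB n)" "Gg n (Suc i) \<in> carrier (FB n)"
    using ab by (auto intro!: Sg_carrier Gg_carrier)
  show ?thesis
  proof (cases b)
    case False
    have cl: "clsn n [a] = Sg n i" using ab False by (simp add: elem_def)
    have e1: "Sg n i \<otimes>\<^bsub>FB n\<^esub> Gg n i \<in> Fc n (Sg n i)"
      using rel3[OF ab(2,3)] Fc_left[OF F_gen[of "Suc i" n], of "Sg n i"] ab by simp
    have e2: "Sg n i \<in> Fc n (Sg n i)" by (rule Fc_self[OF c(1)])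
    show ?thesis unfolding cl using ab False e1 e2 supp_diff[of "gr_of (Sg n i)" "gr_of (Sg n i \<otimes>\<^bsub>FB n\<^esub> Gg n i)"]
      by (auto simp: ij phi_gen_eq[OF ij(2)])
  next
    case True
    have cl: "clsn n [a] = inv\<^bsub>FB n\<^esub> Sg n i" using ab True by (simp add: inv_elem)
    have e1: "inv\<^bsub>FB n\<^esub> Gg n i \<otimes>\<^bsub>FB n\<^esub> inv\<^bsub>FB n\<^esub> Sg n i \<in> Fc n (inv\<^bsub>FB n\<^esub> Sg n i)"
      using ab by (intro Fc_left F_inv F_gen) auto
    have e2: "inv\<^bsub>FB n\<^esub> Sg n i \<in> Fc n (inv\<^bsub>FB n\<^esub> Sg n i)" using c by (intro Fc_self) simp
    show ?thesis unfolding cl using ab True e1 e2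
      supp_diff[of "gr_of (inv\<^bsub>FB n\<^esub> Sg n i)" "gr_of (inv\<^bsub>FB n\<^esub> Gg n i \<otimes>\<^bsub>FB n\<^esub> inv\<^bsub>FB n\<^esub> Sg n i)"]
      by (auto simp: ij phi_gen_inv_eq[OF ij(2)] Pinv_eq[OF ij(2)])
  qed
qed

lemma letter_conj: "a \<in> SL n \<times> UNIV \<Longrightarrow> conjF n (clsn n [a])"
proof -
  assume a: "a \<in> SL n \<times> UNIV"
  obtain i b where ab: "a = (s i, b)" "1 \<le> i" "i \<le> n - 1" using a by blast
  show ?thesis
  proof (cases b)
    case False then show ?thesis using ab conj_S[OF ab(2,3)] by (simp add: elem_def)
  next
    case True then show ?thesis using ab conj_invS[OF ab(2,3)] by (simp add: inv_elem)
  qed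
qed

lemma word_supp: "w \<in> lists (SL n \<times> UNIV) \<Longrightarrow> gr_supp (phi_word n w k l) \<subseteq> Fc n (clsn n w)"
proof (induction w arbitrary: k l)
  case Nil
  show ?case using Fc_self[of "\<one>\<^bsub>FB n\<^esub>"]
    by (auto simp: phi_word_def gm_one_def gr_one_eq FB_one_cls[symmetric] gr_supp_def gr_zero_def gr_of_def)
next
  case (Cons a w)
  have aS: "a \<in> SL n \<times> UNIV" and wS: "w \<in> lists (SL n \<times> UNIV)" using Cons.prems by auto
  have la: "[a] \<in> lists (gens n \<times> UNIV)" using aS by auto
  have lw: "w \<in> lists (gens n \<times> UNIV)" using wS by (rule Sw_lists)
  have ca: "clsn n [a] \<in> carrier (FB n)" by (rule FB_carrier_cls[OF la])
  have cw: "clsn n w \<in> carrier (FB n)" by (rule FB_carrier_cls[OF lw])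
  have clsaw: "clsn n (a # w) = clsn n [a] \<otimes>\<^bsub>FB n\<^esub> clsn n w" using FB_mult_cls[OF la lw] by simp
  have "gr_supp (phi_word n (a # w) k l) \<subseteq> (\<Union>m\<in>{..<n}. gr_supp (gr_mult n (phi_letter n a k m) (phi_word n w m l)))"
    unfolding phi_word_Cons gm_mult_apply lessThan_def[symmetric] by (rule supp_sum)
  also have "\<dots> \<subseteq> Fc n (clsn n (a # w))"
  proof (rule UN_least)
    fix m assume "m \<in> {..<n}"
    show "gr_supp (gr_mult n (phi_letter n a k m) (phi_word n w m l)) \<subseteq> Fc n (clsn n (a # w))"
    proof (rule order.trans[OF supp_mult], rule subsetI)
      fix z assume "z \<in> (\<lambda>(x, y). x \<otimes>\<^bsub>FB n\<^esub> y) ` (gr_supp (phi_letter n a k m) \<times> gr_supp (phi_word n w m l))"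
      then obtain x y where z: "z = x \<otimes>\<^bsub>FB n\<^esub> y" and x: "x \<in> gr_supp (phi_letter n a k m)"
        and y: "y \<in> gr_supp (phi_word n w m l)" by (auto simp: image_iff)
      have x': "x \<in> Fc n (clsn n [a])" using x letter_supp[OF aS] by blast
      have y': "y \<in> Fc n (clsn n w)" using y Cons.IH[OF wS] by blast
      show "z \<in> Fc n (clsn n (a # w))" unfolding z clsaw
        by (rule Fc_mult[OF letter_conj[OF aS] ca cw x' y'])
    qed
  qed
  finally show ?case .
qed

end

lemma part1: assumes G: "G \<subseteq> braid_sub n" and b: "\<beta> \<in> G"
  shows "in_group_ring (FnG n G) (phi n \<beta> k l)"
proof -
  define w where "w = (SOME w. w \<in> lists (SL n \<times> UNIV) \<and> clsn n w = \<beta>)"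
  have "w \<in> lists (SL n \<times> UNIV) \<and> clsn n w = \<beta>"
    unfolding w_def by (rule someI_ex) (use braid_sub_repr G b in blast)
  then have w: "w \<in> lists (SL n \<times> UNIV)" "clsn n w = \<beta>" by auto
  have ph: "phi n \<beta> = phi_word n w" unfolding phi_def w_def ..
  have fin: "fs (phi n \<beta> k l)" unfolding ph using phi_word_wf[OF Sw_lists[OF w(1)]] gm_wfD(1) GR_fs by blast
  have "Fc n \<beta> \<subseteq> FnG n G"
  proof
    fix z assume "z \<in> Fc n \<beta>"
    then obtain f where f: "f \<in> free_sub n" "z = f \<otimes>\<^bsub>FB n\<^esub> \<beta>" unfolding Fc_def by blast
    show "z \<in> FnG n G" unfolding f(2) FnG_def
      by (rule generate.eng; rule generate.incl) (use f b in auto)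
  qed
  then show ?thesis using word_supp[OF w(1), of k l] fin unfolding in_group_ring_def ph w(2) by blast
qed


lemma sum_blocks: "(\<Sum>e<n*d. f e) = (\<Sum>m<n. \<Sum>c<d. f (m*d + c))" for n d :: nat
proof -
  have "(\<Sum>e<n*d. f e) = (\<Sum>m<n. sum f {m*d..<m*d + d})" using sum.nat_group[where g=f and k=d and n=n] by simp
  also have "\<dots> = (\<Sum>m<n. \<Sum>c<d. f (m*d + c))"
  proof (rule sum.cong[OF HOL.refl])
    fix m
    have "sum f {0 + m*d..<d + m*d} = (\<Sum>c\<in>{0..<d}. f (c + m*d))" by (rule sum.shift_bounds_nat_ivl)
    then show "sum f {m*d..<m*d + d} = (\<Sum>c<d. f (m*d + c))"
      by (simp add: atLeast0LessThan add.commute)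
  qed
  finally show ?thesis .
qed

lemma mult_mat_index: "A \<in> carrier_mat r m \<Longrightarrow> B \<in> carrier_mat m c \<Longrightarrow> i < r \<Longrightarrow> j < c \<Longrightarrow>
  (A * B) $$ (i, j) = (\<Sum>k<m. A $$ (i, k) * B $$ (k, j))"
  by (simp add: scalar_prod_def atLeast0LessThan)

definition rhl :: "(gen word set \<Rightarrow> complex mat) \<Rightarrow> grelt \<Rightarrow> nat \<Rightarrow> nat \<Rightarrow> complex" where
  "rhl \<rho> x a b = (\<Sum>\<gamma>\<in>gr_supp x. of_int (x \<gamma>) * (\<rho> \<gamma> $$ (a, b)))"

lemma rho_lin_index: "a < d \<Longrightarrow> b < d \<Longrightarrow> rho_lin d \<rho> x $$ (a, b) = rhl \<rho> x a b"
  by (simp add: rho_lin_def rhl_def)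

lemma rl_sup: assumes "finite S" "gr_supp x \<subseteq> S"
  shows "rhl \<rho> x a b = (\<Sum>\<gamma>\<in>S. of_int (x \<gamma>) * (\<rho> \<gamma> $$ (a, b)))"
  unfolding rhl_def by (rule sum.mono_neutral_left) (use assms in \<open>auto simp: gr_supp_def\<close>)

lemma rl_zero'[simp]: "rhl \<rho> (\<lambda>_. 0) a b = 0" unfolding rhl_def by (simp add: gr_supp_def)
lemma rl_zero[simp]: "rhl \<rho> 0 a b = 0" unfolding rhl_def by (simp add: gr_supp_def)

lemma rl_add: "fs x \<Longrightarrow> fs y \<Longrightarrow> rhl \<rho> (x + y) a b = rhl \<rho> x a b + rhl \<rho> y a b"
  using rl_sup[of "gr_supp x \<union> gr_supp y" "x + y"] rl_sup[of "gr_supp x \<union> gr_supp y" x]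
    rl_sup[of "gr_supp x \<union> gr_supp y" y] supp_add[of x y]
  by (simp add: sum.distrib distrib_right)

lemma rl_sum: "finite I \<Longrightarrow> (\<And>i. i \<in> I \<Longrightarrow> fs (f i)) \<Longrightarrow> rhl \<rho> (\<Sum>i\<in>I. f i) a b = (\<Sum>i\<in>I. rhl \<rho> (f i) a b)"
proof (induction I rule: finite_induct)
  case empty then show ?case by simp
next
  case (insert i I)
  have fI: "fs (\<Sum>i\<in>I. f i)" using insert by (intro fs_sum) auto
  have fi: "fs (f i)" using insert by simp
  have IH: "rhl \<rho> (\<Sum>i\<in>I. f i) a b = (\<Sum>i\<in>I. rhl \<rho> (f i) a b)" using insert by simp
  show ?case unfolding sum.insert[OF insert.hyps(1,2)] rl_add[OF fi fI] IH ..
qed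

lemma rl_sm: "rhl \<rho> (sm c x) a b = of_int c * rhl \<rho> x a b"
proof (cases "c = 0")
  case True then show ?thesis by (simp add: rhl_def sm_def gr_supp_def)
next
  case False
  have "gr_supp (sm c x) = gr_supp x" using False by (auto simp: gr_supp_def sm_def)
  then show ?thesis by (simp add: rhl_def sm_def sum_distrib_left mult.assoc)
qed

lemma rl_of: "rhl \<rho> (gr_of \<gamma>) a b = \<rho> \<gamma> $$ (a, b)"
  by (simp add: rhl_def)

lemma sum3_swapc: "(\<Sum>c\<in>C. \<Sum>a\<in>A. \<Sum>b\<in>B. f a b c) = (\<Sum>a\<in>A. \<Sum>b\<in>B. \<Sum>c\<in>C. (f a b c :: complex))"
  by (rule sum3_swap)

lemma rl_mult:
  assumes H: "\<And>x y. x \<in> H \<Longrightarrow> y \<in> H \<Longrightarrow> \<rho> (x \<otimes>\<^bsub>FB n\<^esub> y) = \<rho> x * \<rho> y"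
    and Hc: "\<And>x. x \<in> H \<Longrightarrow> \<rho> x \<in> carrier_mat d d"
    and x: "in_group_ring H x" and y: "in_group_ring H y" and ab: "a < d" "b < d"
  shows "rhl \<rho> (gr_mult n x y) a b = (\<Sum>c<d. rhl \<rho> x a c * rhl \<rho> y c b)"
proof -
  let ?S = "gr_supp x" and ?T = "gr_supp y"
  have f: "finite ?S" "finite ?T" "?S \<subseteq> H" "?T \<subseteq> H" using x y by (auto simp: in_group_ring_def)
  have "rhl \<rho> (gr_mult n x y) a b = rhl \<rho> (\<Sum>\<alpha>\<in>?S. \<Sum>\<beta>\<in>?T. sm (x \<alpha> * y \<beta>) (gr_of (fbm n \<alpha> \<beta>))) a b"
    by (subst gr_mult_expand[of ?S ?T]) (use f in auto)
  also have "\<dots> = (\<Sum>\<alpha>\<in>?S. \<Sum>\<beta>\<in>?T. of_int (x \<alpha> * y \<beta>) * \<rho> (fbm n \<alpha> \<beta>) $$ (a, b))"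
    using f by (simp add: rl_sum fs_sum fs_sm rl_sm rl_of)
  also have "\<dots> = (\<Sum>\<alpha>\<in>?S. \<Sum>\<beta>\<in>?T. \<Sum>c<d. (of_int (x \<alpha>) * \<rho> \<alpha> $$ (a, c)) * (of_int (y \<beta>) * \<rho> \<beta> $$ (c, b)))"
  proof (intro sum.cong HOL.refl)
    fix \<alpha> \<beta> assume "\<alpha> \<in> ?S" "\<beta> \<in> ?T"
    then have ab': "\<alpha> \<in> H" "\<beta> \<in> H" using f by auto
    have "\<rho> (fbm n \<alpha> \<beta>) $$ (a, b) = (\<Sum>c<d. \<rho> \<alpha> $$ (a, c) * \<rho> \<beta> $$ (c, b))"
      unfolding fbm_def H[OF ab'] by (rule mult_mat_index[OF Hc[OF ab'(1)] Hc[OF ab'(2)] ab])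
    then show "of_int (x \<alpha> * y \<beta>) * \<rho> (fbm n \<alpha> \<beta>) $$ (a, b) =
      (\<Sum>c<d. (of_int (x \<alpha>) * \<rho> \<alpha> $$ (a, c)) * (of_int (y \<beta>) * \<rho> \<beta> $$ (c, b)))"
      by (simp add: sum_distrib_left mult_ac)
  qed
  also have "\<dots> = (\<Sum>c<d. \<Sum>\<alpha>\<in>?S. \<Sum>\<beta>\<in>?T. (of_int (x \<alpha>) * \<rho> \<alpha> $$ (a, c)) * (of_int (y \<beta>) * \<rho> \<beta> $$ (c, b)))"
    by (rule sum3_swapc[symmetric])
  also have "\<dots> = (\<Sum>c<d. rhl \<rho> x a c * rhl \<rho> y c b)"
    by (simp add: rhl_def sum_product)
  finally show ?thesis .
qed


lemma rho_plus_index: "a < n * d \<Longrightarrow> b < n * d \<Longrightarrow>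
  rho_plus n d \<rho> \<beta> $$ (a, b) = rhl \<rho> (phi n \<beta> (a div d) (b div d)) (a mod d) (b mod d)"
proof -
  assume a: "a < n * d" and b: "b < n * d"
  then have "0 < d" by (cases d) auto
  then show ?thesis using a b by (simp add: rho_plus_def rho_lin_index)
qed

lemma rho_plus_car: "rho_plus n d \<rho> \<beta> \<in> carrier_mat (n * d) (n * d)"
  by (simp add: rho_plus_def)

lemma rho_one_mat:
  assumes c: "M \<in> carrier_mat d d" and inv: "invertible_mat M" and idem: "M = M * M"
  shows "M = 1\<^sub>m d"
proof -
  obtain B where B1: "M * B = 1\<^sub>m (dim_row M)" and B2: "B * M = 1\<^sub>m (dim_row B)"
    using inv unfolding invertible_mat_def inverts_mat_def by blast
  have dr: "dim_row M = d" "dim_col M = d" using c by auto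
  have "dim_col B = d" using arg_cong[OF B1, of dim_col] dr by simp
  moreover have "dim_row B = d" using arg_cong[OF B2, of dim_col] dr by simp
  ultimately have Bc: "B \<in> carrier_mat d d" by auto
  have B2': "B * M = 1\<^sub>m d" using B2 Bc by simp
  have "M = (B * M) * M" using B2' c by simp
  also have "\<dots> = B * (M * M)" by (rule assoc_mult_mat[OF Bc c c])
  also have "\<dots> = 1\<^sub>m d" using B2' idem[symmetric] by simp
  finally show ?thesis .
qed

lemma eq_divmod: "a div d = b div d \<Longrightarrow> a mod d = b mod (d::nat) \<Longrightarrow> a = b"
  by (metis div_mult_mod_eq)

theorem theorem3p1:
  fixes n d :: nat and G :: "gen word set set" and \<rho> :: "gen word set \<Rightarrow> complex mat"
  assumes "2 \<le> n"
    and "subgroup G (FB n)" and "G \<subseteq> braid_sub n"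
    and "is_rep n (FnG n G) d \<rho>"
  shows "(\<forall>\<beta>\<in>G. \<forall>k<n. \<forall>l<n. in_group_ring (FnG n G) (phi n \<beta> k l))
         \<and> is_rep n G (n * d) (rho_plus n d \<rho>)"
proof -
  interpret Gp: group "FB n" by (rule FB_group)
  have sG: "subgroup G (FB n)" by fact
  have Gb: "G \<subseteq> braid_sub n" by fact
  let ?H = "FnG n G"
  have GH: "G \<subseteq> ?H" unfolding FnG_def by (auto intro: generate.incl)
  have oneH: "\<one>\<^bsub>FB n\<^esub> \<in> ?H" unfolding FnG_def by (rule generate.one)
  have rep_car: "\<And>x. x \<in> ?H \<Longrightarrow> \<rho> x \<in> carrier_mat d d"
    and rep_inv: "\<And>x. x \<in> ?H \<Longrightarrow> invertible_mat (\<rho> x)"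
    and rep_mult: "\<And>x y. x \<in> ?H \<Longrightarrow> y \<in> ?H \<Longrightarrow> \<rho> (x \<otimes>\<^bsub>FB n\<^esub> y) = \<rho> x * \<rho> y"
    using assms(4) unfolding is_rep_def by auto
  have P1: "\<forall>\<beta>\<in>G. \<forall>k<n. \<forall>l<n. in_group_ring ?H (phi n \<beta> k l)"
    using part1[OF Gb] by blast
  have rho1: "\<rho> \<one>\<^bsub>FB n\<^esub> = 1\<^sub>m d"
  proof (rule rho_one_mat[OF rep_car[OF oneH] rep_inv[OF oneH]])
    show "\<rho> \<one>\<^bsub>FB n\<^esub> = \<rho> \<one>\<^bsub>FB n\<^esub> * \<rho> \<one>\<^bsub>FB n\<^esub>"
      using rep_mult[OF oneH oneH] by simp
  qed
  have inG_b: "\<And>x. x \<in> G \<Longrightarrow> x \<in> braid_sub n" using Gb by blast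
  have mult: "rho_plus n d \<rho> (x \<otimes>\<^bsub>FB n\<^esub> y) = rho_plus n d \<rho> x * rho_plus n d \<rho> y"
    if x: "x \<in> G" and y: "y \<in> G" for x y
  proof (rule eq_matI)
    show "dim_row (rho_plus n d \<rho> (x \<otimes>\<^bsub>FB n\<^esub> y)) = dim_row (rho_plus n d \<rho> x * rho_plus n d \<rho> y)"
      by (simp add: rho_plus_def)
    show "dim_col (rho_plus n d \<rho> (x \<otimes>\<^bsub>FB n\<^esub> y)) = dim_col (rho_plus n d \<rho> x * rho_plus n d \<rho> y)"
      by (simp add: rho_plus_def)
    fix a b assume "a < dim_row (rho_plus n d \<rho> x * rho_plus n d \<rho> y)" "b < dim_col (rho_plus n d \<rho> x * rho_plus n d \<rho> y)"
    then have ab: "a < n * d" "b < n * d" by (simp_all add: rho_plus_def)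
    then have d0: "0 < d" by (cases d) auto
    have A: "a div d < n" "b div d < n" using ab by (simp_all add: less_mult_imp_div_less)
    have am: "a mod d < d" "b mod d < d" using d0 by auto
    have wf: "gm_wf n (phi n x)" "gm_wf n (phi n y)" using phi_wf inG_b x y by auto
    have "rho_plus n d \<rho> (x \<otimes>\<^bsub>FB n\<^esub> y) $$ (a, b)
       = rhl \<rho> (gm_mult n (phi n x) (phi n y) (a div d) (b div d)) (a mod d) (b mod d)"
      using ab by (simp add: rho_plus_index phi_mult inG_b x y)
    also have "\<dots> = (\<Sum>m<n. rhl \<rho> (gr_mult n (phi n x (a div d) m) (phi n y m (b div d))) (a mod d) (b mod d))"
      unfolding gm_mult_apply
      by (rule rl_sum) (auto intro: fs_mult GR_fs gm_wfD(1)[OF wf(1)] gm_wfD(1)[OF wf(2)])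
    also have "\<dots> = (\<Sum>m<n. \<Sum>c<d. rhl \<rho> (phi n x (a div d) m) (a mod d) c * rhl \<rho> (phi n y m (b div d)) c (b mod d))"
    proof (rule sum.cong[OF HOL.refl])
      fix m assume m: "m \<in> {..<n}"
      show "rhl \<rho> (gr_mult n (phi n x (a div d) m) (phi n y m (b div d))) (a mod d) (b mod d) =
        (\<Sum>c<d. rhl \<rho> (phi n x (a div d) m) (a mod d) c * rhl \<rho> (phi n y m (b div d)) c (b mod d))"
        by (rule rl_mult[where H = ?H, OF rep_mult rep_car _ _ am]) (use P1 x y A m in auto)
    qed
    also have "\<dots> = (\<Sum>e<n * d. rhl \<rho> (phi n x (a div d) (e div d)) (a mod d) (e mod d) *
        rhl \<rho> (phi n y (e div d) (b div d)) (e mod d) (b mod d))"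
      unfolding sum_blocks using d0 by (intro sum.cong HOL.refl) auto
    also have "\<dots> = (\<Sum>e<n * d. rho_plus n d \<rho> x $$ (a, e) * rho_plus n d \<rho> y $$ (e, b))"
      using ab by (intro sum.cong HOL.refl) (simp add: rho_plus_index)
    also have "\<dots> = (rho_plus n d \<rho> x * rho_plus n d \<rho> y) $$ (a, b)"
      by (rule mult_mat_index[symmetric, OF rho_plus_car rho_plus_car ab])
    finally show "rho_plus n d \<rho> (x \<otimes>\<^bsub>FB n\<^esub> y) $$ (a, b) = (rho_plus n d \<rho> x * rho_plus n d \<rho> y) $$ (a, b)" .
  qed
  have one: "rho_plus n d \<rho> \<one>\<^bsub>FB n\<^esub> = 1\<^sub>m (n * d)"
  proof (rule eq_matI)
    fix a b assume "a < dim_row (1\<^sub>m (n * d))" "b < dim_col (1\<^sub>m (n * d) :: complex mat)"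
    then have ab: "a < n * d" "b < n * d" by simp_all
    then have d0: "0 < d" by (cases d) auto
    have A: "a div d < n" "b div d < n" using ab by (simp_all add: less_mult_imp_div_less)
    have am: "a mod d < d" "b mod d < d" using d0 by auto
    have "rho_plus n d \<rho> \<one>\<^bsub>FB n\<^esub> $$ (a, b) = rhl \<rho> (gm_one n (a div d) (b div d)) (a mod d) (b mod d)"
      using ab by (simp add: rho_plus_index phi_one)
    also have "\<dots> = (if a = b then 1 else 0)"
      using A am rho1 by (auto simp: gm_one_def gr_one_eq rl_of gr_zero_eq intro: eq_divmod)
    also have "\<dots> = 1\<^sub>m (n * d) $$ (a, b)" using ab by simp
    finally show "rho_plus n d \<rho> \<one>\<^bsub>FB n\<^esub> $$ (a, b) = 1\<^sub>m (n * d) $$ (a, b)" .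
  qed (simp_all add: rho_plus_def)
  have "is_rep n G (n * d) (rho_plus n d \<rho>)"
    unfolding is_rep_def
  proof (intro conjI ballI)
    fix x assume x: "x \<in> G"
    show "rho_plus n d \<rho> x \<in> carrier_mat (n * d) (n * d)" by (rule rho_plus_car)
    have ix: "inv\<^bsub>FB n\<^esub> x \<in> G" using sG x by (rule subgroup.m_inv_closed)
    have xc: "x \<in> carrier (FB n)" using sG x subgroup.subset by blast
    have e1: "rho_plus n d \<rho> x * rho_plus n d \<rho> (inv\<^bsub>FB n\<^esub> x) = 1\<^sub>m (n * d)"
      using mult[OF x ix] xc one by simp
    have e2: "rho_plus n d \<rho> (inv\<^bsub>FB n\<^esub> x) * rho_plus n d \<rho> x = 1\<^sub>m (n * d)"
      using mult[OF ix x] xc one by simp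
    show "invertible_mat (rho_plus n d \<rho> x)"
      unfolding invertible_mat_def inverts_mat_def
      using e1 e2 by (intro conjI exI[of _ "rho_plus n d \<rho> (inv\<^bsub>FB n\<^esub> x)"]) (simp_all add: rho_plus_def)
  next
    fix x y assume "x \<in> G" "y \<in> G"
    then show "rho_plus n d \<rho> (x \<otimes>\<^bsub>FB n\<^esub> y) = rho_plus n d \<rho> x * rho_plus n d \<rho> y" by (rule mult)
  qed
  with P1 show ?thesis by blast
qed


end
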